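(* Let $f:\mathbb{R}^n\times\mathbb{R}^m\to\mathbb{R}$ and $g:\mathbb{R}^n\times\mathbb{R}^m\to\mathbb{R}^p$ belong to $\mathcal{C}^2(\mathbb{R}^n\times\mathbb{R}^m)$. Assume that for every $x\in\mathbb{R}^n$, $f(x,\cdot)$ is strictly convex, $g(x,\cdot)$ is convex (componentwise), and the problem $\min_{u\in\mathbb{R}^m} f(x,u)$ subject to $g(x,u)\le 0$ has at least one minimizer; let $u^*(x)$ denote the (unique) minimizer. Suppose local compact feasibility holds at every $x\in\mathbb{R}^n$, and let $F:\mathbb{R}^n\times\mathbb{R}^m\to\mathbb{R}^n$ be locally Lipschitz. Then for every $x\in\mathbb{R}^n$ there exists $\delta_x>0$ such that $\dot y=F(y,u^*(y))$ has at least one Filippov solution $y:(-\delta_x,\delta_x)\to\mathbb{R}^n$ with $y(0)=x$.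
   Context: Local compact feasibility holds at $x$ if there exist a compact $K\subset\mathbb{R}^m$ and $\delta>0$ such that for all $y$ with $\|y-x\|<\delta$ there is $u\in K$ with $g(y,u)\le 0$. The Filippov set-valued map of $\dot y=F(y,u^*(y))$ is $\mathcal{F}(x)=\bigcap_{\delta>0}\bigcap_{\mu(S)=0}\overline{\mathrm{co}}\{F(y,u^*(y)) : \|y-x\|\le\delta,\ y\notin S\}$, where $\mu$ is Lebesgue measure and $\overline{\mathrm{co}}$ the closed convex hull; a Filippov solution on an interval $I$ is an absolutely continuous $y:I\to\mathbb{R}^n$ with $\dot y(t)\in\mathcal{F}(y(t))$ for almost every $t\in I$. *)

theory Defs
  imports "HOL-Analysis.Analysis"
begin

definition C2 :: "('a::real_normed_vector \<Rightarrow> 'b::real_normed_vector) \<Rightarrow> bool" where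
  "C2 f \<longleftrightarrow> (\<exists>Df D2f.
      (\<forall>x. (f has_derivative blinfun_apply (Df x)) (at x)) \<and>
      (\<forall>x. (Df has_derivative blinfun_apply (D2f x)) (at x)) \<and>
      continuous_on UNIV D2f)"

definition strictly_convex_on :: "'a::real_vector set \<Rightarrow> ('a \<Rightarrow> real) \<Rightarrow> bool" where
  "strictly_convex_on S h \<longleftrightarrow> convex S \<and>
     (\<forall>x\<in>S. \<forall>y\<in>S. \<forall>t::real. x \<noteq> y \<and> 0 < t \<and> t < 1 \<longrightarrow>
        h ((1 - t) *\<^sub>R x + t *\<^sub>R y) < (1 - t) * h x + t * h y)"

definition feasible :: "('n \<times> 'm \<Rightarrow> real^'p) \<Rightarrow> 'n \<Rightarrow> 'm \<Rightarrow> bool" where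
  "feasible g x u \<longleftrightarrow> (\<forall>i. g (x, u) $ i \<le> 0)"

definition is_minimizer :: "('n \<times> 'm \<Rightarrow> real) \<Rightarrow> ('n \<times> 'm \<Rightarrow> real^'p) \<Rightarrow> 'n \<Rightarrow> 'm \<Rightarrow> bool" where
  "is_minimizer f g x u \<longleftrightarrow> feasible g x u \<and> (\<forall>v. feasible g x v \<longrightarrow> f (x, u) \<le> f (x, v))"

definition ustar :: "('n \<times> 'm \<Rightarrow> real) \<Rightarrow> ('n \<times> 'm \<Rightarrow> real^'p) \<Rightarrow> 'n \<Rightarrow> 'm" where
  "ustar f g x = (THE u. is_minimizer f g x u)"

definition local_compact_feasibility ::
    "('n::real_normed_vector \<times> 'm::real_normed_vector \<Rightarrow> real^'p) \<Rightarrow> 'n \<Rightarrow> bool" where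
  "local_compact_feasibility g x \<longleftrightarrow>
     (\<exists>K. compact K \<and> (\<exists>\<delta>>0. \<forall>y. norm (y - x) < \<delta> \<longrightarrow> (\<exists>u\<in>K. feasible g y u)))"

definition locally_lipschitz :: "('a::metric_space \<Rightarrow> 'b::metric_space) \<Rightarrow> bool" where
  "locally_lipschitz h \<longleftrightarrow> (\<forall>z. \<exists>r>0. \<exists>L. L-lipschitz_on (ball z r) h)"

definition Filippov :: "('n::euclidean_space \<Rightarrow> 'n) \<Rightarrow> 'n \<Rightarrow> 'n set" where
  "Filippov G x = (\<Inter>\<delta>\<in>{0<..}. \<Inter>S\<in>null_sets lebesgue.
      closure (convex hull {G y | y. norm (y - x) \<le> \<delta> \<and> y \<notin> S}))"

definition absolutely_continuous_fun :: "real set \<Rightarrow> (real \<Rightarrow> 'a::real_normed_vector) \<Rightarrow> bool" where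
  "absolutely_continuous_fun I y \<longleftrightarrow>
     (\<forall>\<epsilon>>0. \<exists>d>0. \<forall>(N::nat) a b.
        (\<forall>k<N. a k \<le> b k \<and> {a k..b k} \<subseteq> I) \<and>
        (\<forall>k<N. \<forall>l<N. k \<noteq> l \<longrightarrow> {a k<..<b k} \<inter> {a l<..<b l} = {}) \<and>
        (\<Sum>k<N. b k - a k) < d
        \<longrightarrow> (\<Sum>k<N. norm (y (b k) - y (a k))) < \<epsilon>)"

definition Filippov_solution :: "('n::euclidean_space \<Rightarrow> 'n) \<Rightarrow> real set \<Rightarrow> (real \<Rightarrow> 'n) \<Rightarrow> bool" where
  "Filippov_solution G I y \<longleftrightarrow> absolutely_continuous_fun I y \<and>
     (AE t in lebesgue. t \<in> I \<longrightarrow>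
        (\<exists>v. (y has_vector_derivative v) (at t) \<and> v \<in> Filippov G (y t)))"

end

theory Submission
  imports Defs "HOL-Analysis.Analysis" "HOL-Complex_Analysis.Great_Picard"
begin


lemma core_negligible:
  fixes h :: "real \<Rightarrow> real" and E :: "real set"
  assumes mono: "\<And>x y. x \<le> y \<Longrightarrow> h x \<le> h y" and cont: "continuous_on UNIV h"
    and rs: "0 < r" "r < s"
    and Eab: "E \<subseteq> {a<..<b}"
    and Eleft: "\<And>x d. x \<in> E \<Longrightarrow> 0 < d \<Longrightarrow> \<exists>t. 0<t \<and> t<d \<and> h x - h (x-t) < r*t"
    and Eright: "\<And>x d. x \<in> E \<Longrightarrow> 0 < d \<Longrightarrow> \<exists>t. 0<t \<and> t<d \<and> s*t < h (x+t) - h x"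
  shows "negligible E"
proof -
  define \<nu> where "\<nu> = interval_measure h"
  have \<nu>Icc: "emeasure \<nu> {c..d} = ennreal (h d - h c)" if "c \<le> d" for c d
    using emeasure_interval_measure_Icc[OF that mono cont] \<nu>_def by simp
  have sets_\<nu>[measurable_cong]: "sets \<nu> = sets borel" by (simp add: \<nu>_def)
  define \<U> where "\<U> = {measure lebesgue U | U. E \<subseteq> U \<and> U \<in> lmeasurable}"
  define m where "m = Inf \<U>"
  have ab: "measure lebesgue {a..b} \<in> \<U>"
  proof -
    have "E \<subseteq> {a..b}" using Eab by auto
    then show ?thesis unfolding \<U>_def by blast
  qed
  have bdd: "bdd_below \<U>"
    unfolding \<U>_def by (rule bdd_belowI[of _ 0]) auto
  have m0: "0 \<le> m"
    unfolding m_def using ab by (intro cInf_greatest) (auto simp: \<U>_def)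
  have key: "s * (m - e) \<le> r * (m + e)" if e: "e > 0" for e
  proof -
    obtain u where u: "u \<in> \<U>" "u < m + e/2"
      using cInf_lessD[of \<U> "m + e/2"] ab e unfolding m_def by auto
    then obtain U where U: "E \<subseteq> U" "U \<in> lmeasurable" "measure lebesgue U < m + e/2"
      unfolding \<U>_def by auto
    have e2: "e/2 > 0" using e by simp
    obtain T where T: "open T" "U \<subseteq> T" "(T - U) \<in> lmeasurable" "emeasure lebesgue (T - U) < ennreal (e/2)"
      by (rule sets_lebesgue_outer_open[OF fmeasurableD[OF U(2)] e2])
    have mTU: "measure lebesgue (T - U) < e/2"
      by (metis T(3) T(4) emeasure_eq_measure2 ennreal_less_iff measure_nonneg)
    define Om where "Om = T \<inter> {a<..<b}"
    have Om: "open Om" "E \<subseteq> Om" "Om \<subseteq> {a<..<b}" using T U Eab by (auto simp: Om_def)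
    have Ol: "Om \<in> lmeasurable"
    proof (rule bounded_set_imp_lmeasurable)
      have "bounded {a<..<b}" by (simp add: greaterThanLessThan_eq_ball)
      then show "bounded Om" using Om(3) bounded_subset by blast
      have "Om \<in> sets borel" using Om(1) by auto
      then show "Om \<in> sets lebesgue" using sets_completionI_sets[of Om lborel] by simp
    qed
    have mO: "measure lebesgue Om < m + e"
    proof -
      have "measure lebesgue Om \<le> measure lebesgue (U \<union> (T - U))"
      proof (rule measure_mono_fmeasurable)
        show "U \<union> (T - U) \<in> lmeasurable" using U(2) T(3) by (rule fmeasurable.Un)
        show "Om \<subseteq> U \<union> (T - U)" by (auto simp: Om_def)
        show "Om \<in> sets lebesgue" using Ol by (rule fmeasurableD)
      qed
      also have "\<dots> \<le> measure lebesgue U + measure lebesgue (T - U)"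
        by (intro measure_Un_le fmeasurableD U(2) T(3))
      finally show ?thesis using U mTU by linarith
    qed
    define K1 where "K1 = {(x - t/2, t/2) | x t. x \<in> E \<and> 0 < t \<and> {x-t..x} \<subseteq> Om \<and> h x - h (x-t) < r*t}"
    have K1pos: "\<And>i. i \<in> K1 \<Longrightarrow> 0 < snd i" by (auto simp: K1_def)
    have K1cov: "\<exists>i. i \<in> K1 \<and> x \<in> cball (fst i) (snd i) \<and> snd i < d" if "x \<in> E" "0 < d" for x d
    proof -
      have "x \<in> Om" using Om(2) that(1) by blast
      then obtain e' where e': "e' > 0" "ball x e' \<subseteq> Om" using Om(1) open_contains_ball by blast
      have dpos: "0 < min d e'" using e' that by simp
      from Eleft[OF that(1) dpos] obtain t where t: "0<t" "t<min d e'" "h x - h (x-t) < r*t" by blast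
      have "{x-t..x} \<subseteq> Om" using t e' by (auto simp: dist_real_def subset_eq)
      then have "(x - t/2, t/2) \<in> K1" unfolding K1_def mem_Collect_eq
        by (intro exI[of _ x] exI[of _ t]) (use t that in auto)
      moreover have "x \<in> cball (x - t/2) (t/2)" using t by (auto simp: dist_real_def)
      ultimately show ?thesis using t by (intro exI[of _ "(x - t/2, t/2)"]) auto
    qed
    obtain C1 where C1: "countable C1" "C1 \<subseteq> K1"
      "pairwise (\<lambda>i j. disjnt (cball (fst i) (snd i)) (cball (fst j) (snd j))) C1"
      "negligible (E - (\<Union>i\<in>C1. cball (fst i) (snd i)))"
      by (rule Vitali_covering_theorem_cballs[of K1 snd E fst, OF K1pos K1cov])
    define V where "V = (\<Union>i\<in>C1. ball (fst i) (snd i))"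
    have Vopen: "open V" by (auto simp: V_def)
    have negEV: "negligible (E - V)"
    proof (rule negligible_subset)
      show "negligible ((E - (\<Union>i\<in>C1. cball (fst i) (snd i))) \<union> (\<Union>i\<in>C1. sphere (fst i) (snd i)))"
        using C1 by (intro negligible_Un negligible_countable_Union) (auto simp: negligible_sphere)
      show "E - V \<subseteq> (E - (\<Union>i\<in>C1. cball (fst i) (snd i))) \<union> (\<Union>i\<in>C1. sphere (fst i) (snd i))"
        unfolding V_def by (force simp: less_le)
    qed
    define K2 where "K2 = {(y + t/2, t/2) | y t. y \<in> E \<inter> V \<and> 0 < t \<and> {y..y+t} \<subseteq> V \<and> s*t < h (y+t) - h y}"
    have K2pos: "\<And>i. i \<in> K2 \<Longrightarrow> 0 < snd i" by (auto simp: K2_def)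
    have K2cov: "\<exists>i. i \<in> K2 \<and> x \<in> cball (fst i) (snd i) \<and> snd i < d" if "x \<in> E \<inter> V" "0 < d" for x d
    proof -
      have "x \<in> V" using that(1) by blast
      then obtain e' where e': "e' > 0" "ball x e' \<subseteq> V" using Vopen open_contains_ball by blast
      have dpos: "0 < min d e'" using e' that by simp
      have xE: "x \<in> E" using that(1) by blast
      from Eright[OF xE dpos] obtain t where t: "0<t" "t<min d e'" "s*t < h (x+t) - h x" by blast
      have "{x..x+t} \<subseteq> V" using t e' by (auto simp: dist_real_def subset_eq)
      then have "(x + t/2, t/2) \<in> K2" unfolding K2_def mem_Collect_eq
        by (intro exI[of _ x] exI[of _ t]) (use t that in auto)
      moreover have "x \<in> cball (x + t/2) (t/2)" using t by (auto simp: dist_real_def)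
      ultimately show ?thesis using t by (intro exI[of _ "(x + t/2, t/2)"]) auto
    qed
    obtain C2 where C2: "countable C2" "C2 \<subseteq> K2"
      "pairwise (\<lambda>i j. disjnt (cball (fst i) (snd i)) (cball (fst j) (snd j))) C2"
      "negligible (E \<inter> V - (\<Union>i\<in>C2. cball (fst i) (snd i)))"
      by (rule Vitali_covering_theorem_cballs[of K2 snd "E \<inter> V" fst, OF K2pos K2cov])
    define W1 where "W1 = (\<Union>i\<in>C1. cball (fst i) (snd i))"
    define W2 where "W2 = (\<Union>i\<in>C2. cball (fst i) (snd i))"
    have W1b: "W1 \<in> sets borel" unfolding W1_def
      using C1(1) by (intro sets.countable_UN') auto
    have W2b: "W2 \<in> sets borel" unfolding W2_def
      using C2(1) by (intro sets.countable_UN') auto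
    have W1O: "W1 \<subseteq> Om"
    proof -
      have "cball (fst i) (snd i) \<subseteq> Om" if "i \<in> C1" for i
      proof -
        from that C1(2) obtain x t where i: "i = (x - t/2, t/2)" "{x-t..x} \<subseteq> Om"
          unfolding K1_def by blast
        have "cball (fst i) (snd i) = {x-t..x}" using i by (simp add: cball_eq_atLeastAtMost)
        then show ?thesis using i by simp
      qed
      then show ?thesis unfolding W1_def by blast
    qed
    have VW1: "V \<subseteq> W1" by (auto simp: V_def W1_def)
    have W2V: "W2 \<subseteq> V"
    proof -
      have "cball (fst i) (snd i) \<subseteq> V" if "i \<in> C2" for i
      proof -
        from that C2(2) obtain x t where i: "i = (x + t/2, t/2)" "{x..x+t} \<subseteq> V"
          unfolding K2_def by blast
        have "cball (fst i) (snd i) = {x..x+t}" using i by (simp add: cball_eq_atLeastAtMost)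
        then show ?thesis using i by simp
      qed
      then show ?thesis unfolding W2_def by blast
    qed
    have Ob: "Om \<in> sets borel" using Om by auto
    have W1l: "W1 \<in> lmeasurable"
      using fmeasurableI2[OF Ol W1O] sets_completionI_sets[of W1 lborel] W1b by simp
    have W2l: "W2 \<in> lmeasurable"
      using fmeasurableI2[OF W1l] W2V VW1 sets_completionI_sets[of W2 lborel] W2b by auto
    have disj1: "disjoint_family_on (\<lambda>i. cball (fst i) (snd i)) C1"
      using C1(3) unfolding pairwise_def disjoint_family_on_def disjnt_def by blast
    have disj2: "disjoint_family_on (\<lambda>i. cball (fst i) (snd i)) C2"
      using C2(3) unfolding pairwise_def disjoint_family_on_def disjnt_def by blast
    have "emeasure \<nu> W1 = (\<integral>\<^sup>+i. emeasure \<nu> (cball (fst i) (snd i)) \<partial>count_space C1)"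
      unfolding W1_def using C1(1) disj1 by (intro emeasure_UN_countable) (auto simp: sets_\<nu>)
    also have "\<dots> \<le> (\<integral>\<^sup>+i. ennreal r * emeasure lborel (cball (fst i) (snd i)) \<partial>count_space C1)"
    proof (intro nn_integral_mono)
      fix i assume "i \<in> space (count_space C1)"
      then have "i \<in> K1" using C1 by auto
      then obtain x t where i: "i = (x - t/2, t/2)" "0 < t" "h x - h (x-t) < r*t"
        unfolding K1_def by blast
      have "emeasure \<nu> (cball (fst i) (snd i)) = ennreal (h x - h (x - t))"
        using i \<nu>Icc[of "x-t" x] by (simp add: cball_eq_atLeastAtMost)
      also have "\<dots> \<le> ennreal (r * t)" using i by (intro ennreal_leI) simp
      also have "\<dots> = ennreal r * emeasure lborel (cball (fst i) (snd i))"
        using i rs by (simp add: cball_eq_atLeastAtMost ennreal_mult)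
      finally show "emeasure \<nu> (cball (fst i) (snd i)) \<le> ennreal r * emeasure lborel (cball (fst i) (snd i))" .
    qed
    also have "\<dots> = ennreal r * (\<integral>\<^sup>+i. emeasure lborel (cball (fst i) (snd i)) \<partial>count_space C1)"
      by (rule nn_integral_cmult) auto
    also have "\<dots> = ennreal r * emeasure lborel W1"
      unfolding W1_def using C1(1) disj1 by (subst emeasure_UN_countable) auto
    finally have nuW1: "emeasure \<nu> W1 \<le> ennreal r * emeasure lborel W1" .
    have "ennreal s * emeasure lborel W2 = ennreal s * (\<integral>\<^sup>+i. emeasure lborel (cball (fst i) (snd i)) \<partial>count_space C2)"
      unfolding W2_def using C2(1) disj2 by (subst emeasure_UN_countable) auto
    also have "\<dots> = (\<integral>\<^sup>+i. ennreal s * emeasure lborel (cball (fst i) (snd i)) \<partial>count_space C2)"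
      by (rule nn_integral_cmult[symmetric]) auto
    also have "\<dots> \<le> (\<integral>\<^sup>+i. emeasure \<nu> (cball (fst i) (snd i)) \<partial>count_space C2)"
    proof (intro nn_integral_mono)
      fix i assume "i \<in> space (count_space C2)"
      then have "i \<in> K2" using C2 by auto
      then obtain y t where i: "i = (y + t/2, t/2)" "0 < t" "s*t < h (y+t) - h y"
        unfolding K2_def by blast
      have "ennreal s * emeasure lborel (cball (fst i) (snd i)) = ennreal (s * t)"
        using i rs by (simp add: cball_eq_atLeastAtMost ennreal_mult)
      also have "\<dots> \<le> ennreal (h (y+t) - h y)" using i by (intro ennreal_leI) simp
      also have "\<dots> = emeasure \<nu> (cball (fst i) (snd i))"
      proof -
        have "cball (fst i) (snd i) = {y..y+t}" using i by (simp add: cball_eq_atLeastAtMost)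
        then show ?thesis using i \<nu>Icc[of y "y+t"] by simp
      qed
      finally show "ennreal s * emeasure lborel (cball (fst i) (snd i)) \<le> emeasure \<nu> (cball (fst i) (snd i))" .
    qed
    also have "\<dots> = emeasure \<nu> W2"
      unfolding W2_def using C2(1) disj2 by (intro emeasure_UN_countable[symmetric]) (auto simp: sets_\<nu>)
    finally have nuW2: "ennreal s * emeasure lborel W2 \<le> emeasure \<nu> W2" .
    have "emeasure \<nu> W2 \<le> emeasure \<nu> W1"
      using W2V VW1 W1b by (intro emeasure_mono) (auto simp: sets_\<nu>)
    with nuW1 nuW2 have "ennreal s * emeasure lborel W2 \<le> ennreal r * emeasure lborel W1"
      by (meson order_trans)
    moreover have "emeasure lborel W1 \<le> emeasure lborel Om"
      using W1O Ob by (intro emeasure_mono) auto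
    ultimately have "ennreal s * emeasure lborel W2 \<le> ennreal r * emeasure lborel Om"
      by (meson order_trans mult_left_mono zero_le)
    moreover have eW2: "emeasure lborel W2 = ennreal (measure lebesgue W2)"
    proof -
      have "emeasure lborel W2 = emeasure lebesgue W2" using W2b by simp
      also have "\<dots> = measure lebesgue W2" using W2l by (simp add: emeasure_eq_measure2)
      finally show ?thesis .
    qed
    moreover have eO: "emeasure lborel Om = ennreal (measure lebesgue Om)"
    proof -
      have "emeasure lborel Om = emeasure lebesgue Om" using Ob by simp
      also have "\<dots> = measure lebesgue Om" using Ol by (simp add: emeasure_eq_measure2)
      finally show ?thesis .
    qed
    ultimately have "ennreal (s * measure lebesgue W2) \<le> ennreal (r * measure lebesgue Om)"
      using rs by (simp add: ennreal_mult)
    then have ineq: "s * measure lebesgue W2 \<le> r * measure lebesgue Om"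
      using rs by (subst (asm) ennreal_le_iff) auto
    define N where "N = (E - V) \<union> (E \<inter> V - W2)"
    have "negligible N" unfolding N_def W2_def using negEV C2(4) by (rule negligible_Un)
    then obtain T' where T': "N \<subseteq> T'" "T' \<in> lmeasurable" "measure lebesgue T' < e"
      using e negligible_outer by meson
    have "measure lebesgue (W2 \<union> T') \<in> \<U>"
      unfolding \<U>_def using T' W2l by (auto simp: N_def)
    then have "m \<le> measure lebesgue (W2 \<union> T')"
      unfolding m_def using bdd by (rule cInf_lower)
    also have "\<dots> \<le> measure lebesgue W2 + measure lebesgue T'"
      using W2l T' by (intro measure_Un_le) auto
    finally have "m - e \<le> measure lebesgue W2" using T' by linarith
    then have "s * (m - e) \<le> s * measure lebesgue W2" using rs by (intro mult_left_mono) auto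
    also have "\<dots> \<le> r * measure lebesgue Om" by (rule ineq)
    also have "\<dots> \<le> r * (m + e)" using mO rs by (intro mult_left_mono) auto
    finally show ?thesis .
  qed
  have "m = 0"
  proof (rule ccontr)
    assume "m \<noteq> 0"
    with m0 have mpos: "m > 0" by simp
    define e where "e = (s - r) * m / (2 * (s + r))"
    have epos: "e > 0" using mpos rs by (simp add: e_def)
    have "s * (m - e) \<le> r * (m + e)" using key[OF epos] .
    then have "(s - r) * m \<le> (s + r) * e" by (simp add: algebra_simps)
    also have "(s + r) * e = (s - r) * m / 2" using rs by (simp add: e_def field_simps)
    finally show False using mpos rs by (simp add: field_simps)
  qed
  show ?thesis
  proof (subst negligible_outer, intro allI impI)
    fix e :: real assume "e > 0"
    then obtain u where "u \<in> \<U>" "u < e" using cInf_lessD[of \<U> e] ab \<open>m = 0\<close> m_def by auto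
    then show "\<exists>T. E \<subseteq> T \<and> T \<in> lmeasurable \<and> measure lebesgue T < e"
      unfolding \<U>_def by auto
  qed
qed


lemma frequently_at_right_0:
  fixes P :: "real \<Rightarrow> bool"
  assumes "frequently P (at_right 0)" "0 < d"
  shows "\<exists>t. 0 < t \<and> t < d \<and> P t"
proof (rule ccontr)
  assume "\<not> ?thesis"
  then have "eventually (\<lambda>t. \<not> P t) (at_right 0)"
    unfolding eventually_at_right_field using assms(2) by auto
  then show False using assms(1) by (simp add: frequently_def)
qed

lemma frequently_at_left_0:
  fixes P :: "real \<Rightarrow> bool"
  assumes "frequently P (at_left 0)" "0 < d"
  shows "\<exists>t. 0 < t \<and> t < d \<and> P (-t)"
proof (rule ccontr)
  assume H: "\<not> ?thesis"
  have "eventually (\<lambda>t. \<not> P t) (at_left 0)"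
    unfolding eventually_at_left_field
  proof (intro exI[of _ "-d"] conjI allI impI)
    show "-d < 0" using assms(2) by simp
    fix y :: real assume "-d < y" "y < 0"
    then have "0 < -y" "-y < d" by auto
    then show "\<not> P y" using H by force
  qed
  then show False using assms(1) by (simp add: frequently_def)
qed

lemma Liminf_less_frequently:
  fixes f :: "_ \<Rightarrow> ereal"
  assumes "Liminf F f < c" shows "frequently (\<lambda>x. f x < c) F"
proof -
  from assms have "\<not> c \<le> Liminf F f" by simp
  then obtain y where y: "y < c" "\<not> eventually (\<lambda>x. y < f x) F" unfolding le_Liminf_iff by auto
  then have "frequently (\<lambda>x. f x \<le> y) F" by (simp add: not_eventually not_less)
  then show ?thesis by (rule frequently_elim1) (use y in auto)
qed

lemma Limsup_greater_frequently:
  fixes f :: "_ \<Rightarrow> ereal"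
  assumes "c < Limsup F f" shows "frequently (\<lambda>x. c < f x) F"
proof -
  from assms have "\<not> Limsup F f \<le> c" by simp
  then obtain y where y: "c < y" "\<not> eventually (\<lambda>x. f x < y) F" unfolding Limsup_le_iff by auto
  then have "frequently (\<lambda>x. y \<le> f x) F" by (simp add: not_eventually not_less)
  then show ?thesis by (rule frequently_elim1) (use y in auto)
qed

lemma ereal_rats_between:
  fixes B A :: ereal
  assumes "B < A"
  obtains r s where "r \<in> \<rat>" "s \<in> \<rat>" "B < ereal r" "r < s" "ereal s < A"
proof -
  obtain z1 where z1: "B < ereal z1" "ereal z1 < A" using ereal_dense2[OF assms] by blast
  obtain z2 where z2: "ereal z1 < ereal z2" "ereal z2 < A" using ereal_dense2[OF z1(2)] by blast
  have "z1 < z2" using z2 by simp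
  obtain r where r: "r \<in> \<rat>" "z1 < r" "r < z2" using Rats_dense_in_real[OF \<open>z1 < z2\<close>] by blast
  obtain s where s: "s \<in> \<rat>" "r < s" "s < z2" using Rats_dense_in_real[OF r(3)] by blast
  show ?thesis
  proof (rule that[OF r(1) s(1) _ s(2)])
    show "B < ereal r" using z1(1) r(2) by (meson ereal_less_eq(3) less_imp_le order_less_le_trans)
    show "ereal s < A" using z2(2) s(3) by (meson ereal_less_eq(3) less_imp_le order.strict_trans1)
  qed
qed

lemma mono_lipschitz_differentiable_ae:
  fixes h :: "real \<Rightarrow> real"
  assumes hq: "\<And>x y. x \<le> y \<Longrightarrow> 0 \<le> h y - h x \<and> h y - h x \<le> L * (y - x)"
  shows "\<exists>N. negligible N \<and> (\<forall>x. x \<notin> N \<longrightarrow> (\<exists>D. (h has_real_derivative D) (at x)))"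
proof -
  have L0: "0 \<le> L" using hq[of 0 1] by simp
  have mono: "\<And>x y. x \<le> y \<Longrightarrow> h x \<le> h y" using hq by force
  have "L-lipschitz_on UNIV h"
  proof (rule lipschitz_onI[OF _ L0])
    fix x y :: real
    show "dist (h x) (h y) \<le> L * dist x y"
    proof (cases "x \<le> y")
      case True then show ?thesis using hq[OF True] by (simp add: dist_real_def abs_if)
    next
      case False then have "y \<le> x" by simp
      then show ?thesis using hq[OF \<open>y \<le> x\<close>] by (simp add: dist_real_def abs_if)
    qed
  qed
  then have cont: "continuous_on UNIV h" by (rule lipschitz_on_continuous_on)
  define E1 where "E1 = (\<lambda>(r::real,s::real,k::nat). {x \<in> {-real k<..<real k}.
      (\<forall>d>0. \<exists>t. 0<t \<and> t<d \<and> h x - h (x-t) < r*t) \<and> (\<forall>d>0. \<exists>t. 0<t \<and> t<d \<and> s*t < h (x+t) - h x)})"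
  define E2 where "E2 = (\<lambda>(r::real,s::real,k::nat). {x \<in> {-real k<..<real k}.
      (\<forall>d>0. \<exists>t. 0<t \<and> t<d \<and> h (x+t) - h x < r*t) \<and> (\<forall>d>0. \<exists>t. 0<t \<and> t<d \<and> s*t < h x - h (x-t))})"
  have neg1: "negligible (E1 (r,s,k))" if "0 < r" "r < s" for r s k
    by (rule core_negligible[OF mono cont that, of _ "-real k" "real k"]) (auto simp: E1_def)
  have neg2: "negligible (E2 (r,s,k))" if rs: "0 < r" "r < s" for r s k
  proof -
    define h2 where "h2 = (\<lambda>x. - h (- x))"
    have mono2: "\<And>x y. x \<le> y \<Longrightarrow> h2 x \<le> h2 y" unfolding h2_def using mono by simp
    have cont2: "continuous_on UNIV h2" unfolding h2_def
      by (intro continuous_intros continuous_on_compose2[OF cont]) auto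
    have "negligible (uminus ` E2 (r,s,k))"
    proof (rule core_negligible[OF mono2 cont2 rs, of _ "-real k" "real k"])
      show "uminus ` E2 (r, s, k) \<subseteq> {- real k<..<real k}" by (auto simp: E2_def)
      fix x d :: real assume x: "x \<in> uminus ` E2 (r, s, k)" and d: "0 < d"
      then obtain x' where x': "x = - x'" "x' \<in> E2 (r,s,k)" by auto
      from x'(2) d obtain t where t: "0<t" "t<d" "h (x'+t) - h x' < r*t" by (auto simp: E2_def)
      then show "\<exists>t>0. t < d \<and> h2 x - h2 (x - t) < r * t"
        using x'(1) by (intro exI[of _ t]) (simp add: h2_def algebra_simps)
      from x'(2) d obtain t where t: "0<t" "t<d" "s*t < h x' - h (x'-t)" by (auto simp: E2_def)
      then show "\<exists>t>0. t < d \<and> s * t < h2 (x + t) - h2 x"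
        using x'(1) by (intro exI[of _ t]) (simp add: h2_def algebra_simps)
    qed
    then have "negligible (uminus ` uminus ` E2 (r,s,k))"
      by (rule negligible_differentiable_image_negligible[OF order_refl])
         (auto intro!: derivative_intros simp: differentiable_on_def)
    then show ?thesis by (simp add: image_image)
  qed
  define Q where "Q = {(r,s,k) | (r::real) (s::real) (k::nat). r \<in> \<rat> \<and> s \<in> \<rat> \<and> 0 < r \<and> r < s}"
  define N where "N = (\<Union>i\<in>Q. E1 i \<union> E2 i)"
  have "countable Q"
  proof (rule countable_subset)
    show "Q \<subseteq> \<rat> \<times> \<rat> \<times> UNIV" by (auto simp: Q_def)
    show "countable (\<rat> \<times> \<rat> \<times> (UNIV :: nat set))" by (intro countable_SIGMA countable_rat) auto
  qed
  have negN: "negligible N" unfolding N_def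
    using \<open>countable Q\<close> by (intro negligible_countable_Union) (auto simp: Q_def intro!: negligible_Un neg1 neg2)
  have "\<exists>D. (h has_real_derivative D) (at x)" if xN: "x \<notin> N" for x
  proof -
    obtain k :: nat where k: "\<bar>x\<bar> < real k" using reals_Archimedean2 by blast
    have xk: "x \<in> {-real k<..<real k}" using k by auto
    define q where "q = (\<lambda>t. (h (x + t) - h x) / t)"
    define q' where "q' = (\<lambda>t. ereal (q t))"
    have qb: "0 \<le> q t \<and> q t \<le> L" if "t \<noteq> 0" for t
    proof (cases "t > 0")
      case True
      then show ?thesis using hq[of x "x+t"] by (simp add: q_def divide_simps)
    next
      case False
      with that have "t < 0" by simp
      have eq: "q t = (h x - h (x + t)) / (- t)" by (simp add: q_def divide_simps) 
      show ?thesis using hq[of "x+t" x] \<open>t < 0\<close> unfolding eq by (simp add: divide_simps)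
    qed
    have evR: "eventually (\<lambda>t. 0 \<le> q' t \<and> q' t \<le> L) (at_right 0)"
      using eventually_at_right_less[of "0::real"] by eventually_elim (use qb q'_def in auto)
    have evL: "eventually (\<lambda>t. 0 \<le> q' t \<and> q' t \<le> L) (at_left 0)"
    proof -
      have "eventually (\<lambda>t::real. t < 0) (at_left 0)"
        unfolding eventually_at_left_field by (intro exI[of _ "-1"]) auto
      then show ?thesis by eventually_elim (use qb q'_def in auto)
    qed
    define A where "A = Limsup (at_right 0) q'"
    define B where "B = Liminf (at_left 0) q'"
    define C where "C = Limsup (at_left 0) q'"
    define D where "D = Liminf (at_right 0) q'"
    have B0: "0 \<le> B" unfolding B_def by (rule Liminf_bounded) (use evL in \<open>auto elim: eventually_mono\<close>)
    have D0: "0 \<le> D" unfolding D_def by (rule Liminf_bounded) (use evR in \<open>auto elim: eventually_mono\<close>)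
    have AL: "A \<le> L" unfolding A_def by (rule Limsup_bounded) (use evR in \<open>auto elim: eventually_mono\<close>)
    have DA: "D \<le> A" unfolding A_def D_def by (rule Liminf_le_Limsup) simp
    have BC: "B \<le> C" unfolding B_def C_def by (rule Liminf_le_Limsup) simp
    have AB: "A \<le> B"
    proof (rule ccontr)
      assume "\<not> A \<le> B"
      then have "B < A" by simp
      then obtain r s where rs: "r \<in> \<rat>" "s \<in> \<rat>" "B < ereal r" "r < s" "ereal s < A"
        by (rule ereal_rats_between)
      have "(0::ereal) < ereal r" using B0 rs(3) by (rule order.strict_trans1)
      then have r0: "0 < r" by simp
      have fL: "frequently (\<lambda>t. q' t < ereal r) (at_left 0)"
        using Liminf_less_frequently[of "at_left 0" q' "ereal r"] rs(3) B_def by simp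
      have fR: "frequently (\<lambda>t. ereal s < q' t) (at_right 0)"
        using Limsup_greater_frequently[of "ereal s" "at_right 0" q'] rs(5) A_def by simp
      have "x \<in> E1 (r,s,k)"
        unfolding E1_def
      proof (simp only: prod.case mem_Collect_eq, intro conjI xk allI impI)
        fix d :: real assume d: "0 < d"
        from frequently_at_left_0[OF fL d] obtain t where t: "0<t" "t<d" "q' (-t) < ereal r" by blast
        have qm: "q (-t) = (h x - h (x - t)) / t" using t(1) unfolding q_def by (simp add: field_simps)
        have "q (-t) < r" using t(3) unfolding q'_def by simp
        then have "h x - h (x - t) < r * t" unfolding qm using t(1) by (simp add: pos_divide_less_eq)
        then show "\<exists>t. 0 < t \<and> t < d \<and> h x - h (x - t) < r * t" using t by blast
      next
        fix d :: real assume d: "0 < d"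
        from frequently_at_right_0[OF fR d] obtain t where t: "0<t" "t<d" "ereal s < q' t" by blast
        have "s < q t" using t(3) unfolding q'_def by simp
        then have "s * t < h (x + t) - h x" unfolding q_def using t(1) by (simp add: pos_less_divide_eq)
        then show "\<exists>t. 0 < t \<and> t < d \<and> s * t < h (x + t) - h x" using t by blast
      qed
      moreover have "(r,s,k) \<in> Q" using rs r0 by (auto simp: Q_def)
      ultimately show False using xN unfolding N_def by blast
    qed
    have CD: "C \<le> D"
    proof (rule ccontr)
      assume "\<not> C \<le> D"
      then have "D < C" by simp
      then obtain r s where rs: "r \<in> \<rat>" "s \<in> \<rat>" "D < ereal r" "r < s" "ereal s < C"
        by (rule ereal_rats_between)
      have "(0::ereal) < ereal r" using D0 rs(3) by (rule order.strict_trans1)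
      then have r0: "0 < r" by simp
      have fR: "frequently (\<lambda>t. q' t < ereal r) (at_right 0)"
        using Liminf_less_frequently[of "at_right 0" q' "ereal r"] rs(3) D_def by simp
      have fL: "frequently (\<lambda>t. ereal s < q' t) (at_left 0)"
        using Limsup_greater_frequently[of "ereal s" "at_left 0" q'] rs(5) C_def by simp
      have "x \<in> E2 (r,s,k)"
        unfolding E2_def
      proof (simp only: prod.case mem_Collect_eq, intro conjI xk allI impI)
        fix d :: real assume d: "0 < d"
        from frequently_at_right_0[OF fR d] obtain t where t: "0<t" "t<d" "q' t < ereal r" by blast
        have "q t < r" using t(3) unfolding q'_def by simp
        then have "h (x + t) - h x < r * t" unfolding q_def using t(1) by (simp add: pos_divide_less_eq)
        then show "\<exists>t. 0 < t \<and> t < d \<and> h (x + t) - h x < r * t" using t by blast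
      next
        fix d :: real assume d: "0 < d"
        from frequently_at_left_0[OF fL d] obtain t where t: "0<t" "t<d" "ereal s < q' (-t)" by blast
        have qm: "q (-t) = (h x - h (x - t)) / t" using t(1) unfolding q_def by (simp add: field_simps)
        have "s < q (-t)" using t(3) unfolding q'_def by simp
        then have "s * t < h x - h (x - t)" unfolding qm using t(1) by (simp add: pos_less_divide_eq)
        then show "\<exists>t. 0 < t \<and> t < d \<and> s * t < h x - h (x - t)" using t by blast
      qed
      moreover have "(r,s,k) \<in> Q" using rs r0 by (auto simp: Q_def)
      ultimately show False using xN unfolding N_def by blast
    qed
    have eqs: "B = A" "C = A" "D = A" using AB BC CD DA by auto
    have "0 \<le> A" using D0 eqs by simp
    then obtain a where a: "A = ereal a" using AL by (cases A) auto
    have "(q' \<longlongrightarrow> A) (at_right 0)"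
      by (rule Liminf_eq_Limsup) (auto simp: A_def[symmetric] D_def[symmetric] eqs)
    then have R: "(q \<longlongrightarrow> a) (at_right 0)" unfolding q'_def a by simp
    have "(q' \<longlongrightarrow> A) (at_left 0)"
      by (rule Liminf_eq_Limsup) (auto simp: B_def[symmetric] C_def[symmetric] eqs)
    then have L: "(q \<longlongrightarrow> a) (at_left 0)" unfolding q'_def a by simp
    have "(q \<longlongrightarrow> a) (at 0)" by (rule filterlim_split_at[OF L R])
    then have "(h has_real_derivative a) (at x)" unfolding DERIV_def q_def .
    then show ?thesis by blast
  qed
  then show ?thesis using negN by blast
qed

lemma lipschitz_differentiable_ae:
  fixes y :: "real \<Rightarrow> 'a::euclidean_space"
  assumes Ly: "\<And>s t. norm (y s - y t) \<le> L * \<bar>s - t\<bar>"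
  shows "\<exists>N. negligible N \<and> (\<forall>t. t \<notin> N \<longrightarrow> y differentiable (at t))"
proof -
  have "\<exists>N. negligible N \<and> (\<forall>t. t \<notin> N \<longrightarrow> (\<lambda>t. y t \<bullet> b) differentiable (at t))" if b: "b \<in> Basis" for b
  proof -
    define h where "h = (\<lambda>t. y t \<bullet> b + L * t)"
    have hq: "0 \<le> h v - h u \<and> h v - h u \<le> (2*L) * (v - u)" if "u \<le> v" for u v
    proof -
      have "\<bar>y v \<bullet> b - y u \<bullet> b\<bar> \<le> norm (y v - y u)"
        using b by (metis Basis_le_norm inner_diff_left)
      also have "\<dots> \<le> L * (v - u)" using Ly[of v u] that by simp
      finally show ?thesis unfolding h_def by (auto simp: algebra_simps abs_le_iff)
    qed
    obtain N where N: "negligible N" "\<And>x. x \<notin> N \<Longrightarrow> \<exists>D. (h has_real_derivative D) (at x)"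
      using mono_lipschitz_differentiable_ae[of h "2*L", OF hq] by blast
    have "(\<lambda>t. y t \<bullet> b) differentiable (at t)" if tN: "t \<notin> N" for t
    proof -
      obtain D where "(h has_real_derivative D) (at t)" using N(2)[OF tN] by blast
      then have "((\<lambda>t. h t - L * t) has_real_derivative D - L) (at t)"
        by (auto intro!: derivative_eq_intros)
      then have "(\<lambda>t. h t - L * t) differentiable (at t)"
        using real_differentiable_def differentiableI by blast
      then show ?thesis by (simp add: h_def)
    qed
    then show ?thesis using N(1) by blast
  qed
  then obtain N where N: "\<And>b. b \<in> Basis \<Longrightarrow> negligible (N b) \<and> (\<forall>t. t \<notin> N b \<longrightarrow> (\<lambda>t. y t \<bullet> b) differentiable (at t))"
    by metis
  show ?thesis
  proof (intro exI conjI allI impI)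
    show "negligible (\<Union>b\<in>Basis. N b)" using N by (intro negligible_Union) auto
    fix t assume "t \<notin> (\<Union>b\<in>Basis. N b)"
    then show "y differentiable (at t)"
      using N by (subst differentiable_componentwise_within) blast
  qed
qed



definition eP :: "('a::real_vector \<Rightarrow> 'a) \<Rightarrow> real \<Rightarrow> 'a \<Rightarrow> nat \<Rightarrow> 'a" where
  "eP sel h x j = ((\<lambda>z. z + h *\<^sub>R sel z) ^^ j) x"
definition eJ :: "real \<Rightarrow> real \<Rightarrow> nat" where
  "eJ h t = nat \<lfloor>t / h\<rfloor>"
definition eY :: "('a::real_vector \<Rightarrow> 'a) \<Rightarrow> real \<Rightarrow> 'a \<Rightarrow> real \<Rightarrow> 'a" where
  "eY sel h x t = eP sel h x (eJ h t) + (t - real (eJ h t) * h) *\<^sub>R sel (eP sel h x (eJ h t))"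

lemma eP_0[simp]: "eP sel h x 0 = x" by (simp add: eP_def)
lemma eP_Suc: "eP sel h x (Suc j) = eP sel h x j + h *\<^sub>R sel (eP sel h x j)"
  by (simp add: eP_def)

lemma eJ_bounds:
  assumes h: "0 < h" and t: "0 \<le> t"
  shows "real (eJ h t) * h \<le> t" "t < (real (eJ h t) + 1) * h"
proof -
  have f0: "0 \<le> \<lfloor>t / h\<rfloor>" using h t by simp
  have r: "real (eJ h t) = real_of_int \<lfloor>t / h\<rfloor>" using f0 by (simp add: eJ_def)
  have "real_of_int \<lfloor>t / h\<rfloor> * h \<le> (t / h) * h"
    using h by (intro mult_right_mono of_int_floor_le) auto
  then show "real (eJ h t) * h \<le> t" using h unfolding r by simp
  have "(t / h) * h < (real_of_int \<lfloor>t / h\<rfloor> + 1) * h"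
    using h by (intro mult_strict_right_mono real_of_int_floor_add_one_gt) auto
  then show "t < (real (eJ h t) + 1) * h" using h unfolding r by simp
qed

lemma eJ_eq:
  assumes h: "0 < h" and "real j * h \<le> t" "t < (real j + 1) * h"
  shows "eJ h t = j"
proof -
  have "real j \<le> t / h" "t / h < real j + 1" using assms by (simp_all add: pos_le_divide_eq pos_divide_less_eq)
  then have "\<lfloor>t / h\<rfloor> = int j" by (simp add: floor_eq_iff)
  then show ?thesis by (simp add: eJ_def)
qed

lemma eJ_mono:
  assumes h: "0 < h" and "t1 \<le> t2"
  shows "eJ h t1 \<le> eJ h t2"
proof -
  have "t1 / h \<le> t2 / h" using assms by (simp add: divide_right_mono)
  then show ?thesis unfolding eJ_def by (intro nat_mono floor_mono)
qed

lemma eY_piece: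
  assumes h: "0 < h" and s: "real j * h \<le> s" "s \<le> (real j + 1) * h"
  shows "eY sel h x s = eP sel h x j + (s - real j * h) *\<^sub>R sel (eP sel h x j)"
proof (cases "s < (real j + 1) * h")
  case True
  then have "eJ h s = j" using eJ_eq[OF h s(1)] by simp
  then show ?thesis by (simp add: eY_def)
next
  case False
  then have seq: "s = (real j + 1) * h" using s by simp
  have "eJ h s = Suc j"
    using eJ_eq[OF h, of "Suc j" s] seq h by (simp add: algebra_simps)
  then show ?thesis using seq by (simp add: eY_def eP_Suc algebra_simps)
qed

lemma eY_grid:
  assumes h: "0 < h"
  shows "eY sel h x (real j * h) = eP sel h x j"
  using eY_piece[OF h order_refl, of j] h by simp

lemma eY_0[simp]:
  assumes h: "0 < h"
  shows "eY sel h x 0 = x"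
  using eY_grid[OF h, of sel x 0] by simp

lemma eY_bound:
  fixes sel :: "'a::real_inner \<Rightarrow> 'a"
  assumes h: "0 < h" and t: "0 \<le> t1" "t1 \<le> t2"
    and B: "\<And>i. eJ h t1 \<le> i \<Longrightarrow> i \<le> eJ h t2 \<Longrightarrow> w \<bullet> sel (eP sel h x i) \<le> B"
  shows "w \<bullet> (eY sel h x t2 - eY sel h x t1) \<le> B * (t2 - t1)"
proof -
  have main: "\<And>t1. 0 \<le> t1 \<Longrightarrow> t1 \<le> t2 \<Longrightarrow> eJ h t2 - eJ h t1 = n \<Longrightarrow>
     (\<forall>i. eJ h t1 \<le> i \<longrightarrow> i \<le> eJ h t2 \<longrightarrow> w \<bullet> sel (eP sel h x i) \<le> B) \<Longrightarrow>
     w \<bullet> (eY sel h x t2 - eY sel h x t1) \<le> B * (t2 - t1)" for n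
  proof (induction n)
    case (0 t1)
    define j where "j = eJ h t1"
    have "eJ h t1 \<le> eJ h t2" using eJ_mono[OF h] 0 by auto
    with 0 have jj: "eJ h t2 = j" by (simp add: j_def)
    have b1: "real j * h \<le> t1" "t1 \<le> (real j + 1) * h"
      using eJ_bounds[OF h 0(1)] by (auto simp: j_def)
    have t20: "0 \<le> t2" using 0 by simp
    have b2: "real j * h \<le> t2" "t2 \<le> (real j + 1) * h"
      using eJ_bounds[OF h t20] jj by auto
    have "eY sel h x t2 - eY sel h x t1 = (t2 - real j * h) *\<^sub>R sel (eP sel h x j) - (t1 - real j * h) *\<^sub>R sel (eP sel h x j)"
      unfolding eY_piece[OF h b1, of sel x] eY_piece[OF h b2, of sel x] by simp
    also have "\<dots> = (t2 - t1) *\<^sub>R sel (eP sel h x j)" by (simp add: algebra_simps)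
    finally have "eY sel h x t2 - eY sel h x t1 = (t2 - t1) *\<^sub>R sel (eP sel h x j)" .
    then have "w \<bullet> (eY sel h x t2 - eY sel h x t1) = (t2 - t1) * (w \<bullet> sel (eP sel h x j))"
      by simp
    also have "\<dots> \<le> (t2 - t1) * B" using 0 jj by (intro mult_left_mono) (auto simp: j_def)
    finally show ?case by (simp add: mult.commute)
  next
    case (Suc n t1)
    define j where "j = eJ h t1"
    define g where "g = (real j + 1) * h"
    have b1: "real j * h \<le> t1" "t1 < g" using eJ_bounds[OF h Suc.prems(1)] by (auto simp: g_def j_def)
    have jle: "Suc j \<le> eJ h t2" using Suc.prems(3) by (simp add: j_def)
    have t20: "0 \<le> t2" using Suc.prems by simp
    have "g = real (Suc j) * h" by (simp add: g_def)
    also have "\<dots> \<le> real (eJ h t2) * h" using jle h by (intro mult_right_mono) auto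
    also have "\<dots> \<le> t2" using eJ_bounds[OF h t20] by simp
    finally have gt2: "g \<le> t2" .
    have Jg: "eJ h g = Suc j" using eJ_eq[OF h, of "Suc j" g] h by (simp add: g_def algebra_simps)
    have g0: "0 \<le> g" using b1 Suc.prems(1) by simp
    have IH: "w \<bullet> (eY sel h x t2 - eY sel h x g) \<le> B * (t2 - g)"
    proof (rule Suc.IH[OF g0 gt2])
      show "eJ h t2 - eJ h g = n" using Suc.prems(3) Jg by (simp add: j_def)
      show "\<forall>i. eJ h g \<le> i \<longrightarrow> i \<le> eJ h t2 \<longrightarrow> w \<bullet> sel (eP sel h x i) \<le> B"
        using Suc.prems(4) Jg by (auto simp: j_def)
    qed
    have p1: "eY sel h x t1 = eP sel h x j + (t1 - real j * h) *\<^sub>R sel (eP sel h x j)"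
      using eY_piece[OF h b1(1)] b1(2) by (simp add: g_def)
    have p2: "eY sel h x g = eP sel h x j + (g - real j * h) *\<^sub>R sel (eP sel h x j)"
      using eY_piece[OF h, of j g] h by (simp add: g_def)
    have "eY sel h x g - eY sel h x t1 = (g - t1) *\<^sub>R sel (eP sel h x j)"
      unfolding p1 p2 by (simp add: algebra_simps)
    then have "w \<bullet> (eY sel h x g - eY sel h x t1) = (g - t1) * (w \<bullet> sel (eP sel h x j))"
      by simp
    also have "\<dots> \<le> (g - t1) * B" using Suc.prems(4) jle b1 by (intro mult_left_mono) (auto simp: j_def)
    finally have S1: "w \<bullet> (eY sel h x g - eY sel h x t1) \<le> B * (g - t1)" by (simp add: mult.commute)
    have "w \<bullet> (eY sel h x t2 - eY sel h x t1) = w \<bullet> (eY sel h x t2 - eY sel h x g) + w \<bullet> (eY sel h x g - eY sel h x t1)"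
      by (simp add: inner_diff_right)
    also have "\<dots> \<le> B * (t2 - g) + B * (g - t1)" using IH S1 by simp
    finally show ?case by (simp add: algebra_simps)
  qed
  show ?thesis using main[OF t refl] B by blast
qed

lemma eY_lip:
  fixes sel :: "'a::real_inner \<Rightarrow> 'a"
  assumes h: "0 < h" and M: "\<And>z. norm (sel z) \<le> M" and t: "0 \<le> ua" "ua \<le> ub"
  shows "norm (eY sel h x ub - eY sel h x ua) \<le> M * (ub - ua)"
proof -
  define w where "w = eY sel h x ub - eY sel h x ua"
  have "w \<bullet> w \<le> (M * norm w) * (ub - ua)"
    unfolding w_def
  proof (rule eY_bound[OF h t])
    fix i
    have "w \<bullet> sel (eP sel h x i) \<le> norm w * norm (sel (eP sel h x i))" by (rule Cauchy_Schwarz_ineq2[THEN order_trans[OF abs_ge_self]])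
    also have "\<dots> \<le> norm w * M" using M by (intro mult_left_mono) auto
    finally show "(eY sel h x ub - eY sel h x ua) \<bullet> sel (eP sel h x i) \<le> M * norm (eY sel h x ub - eY sel h x ua)"
      by (simp add: w_def mult.commute)
  qed
  then have "norm w * norm w \<le> norm w * (M * (ub - ua))"
    by (simp add: power2_norm_eq_inner[symmetric] power2_eq_square algebra_simps)
  then show ?thesis
    by (metis w_def mult_le_cancel_left_pos norm_ge_zero order_le_less mult_nonneg_nonneg M norm_ge_zero order_trans t(2) diff_ge_0_iff_ge)
qed


lemma inclusion_forward:
  fixes \<Phi> :: "'a::euclidean_space \<Rightarrow> 'a set" and x :: 'a
  assumes \<rho>: "0 < \<rho>" and M0: "0 \<le> M"
    and ne: "\<And>z. z \<in> cball x \<rho> \<Longrightarrow> \<Phi> z \<noteq> {}"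
    and bd: "\<And>z v. z \<in> cball x \<rho> \<Longrightarrow> v \<in> \<Phi> z \<Longrightarrow> norm v \<le> M"
  obtains T y where "0 < T" "y 0 = x" "\<And>s t. norm (y s - y t) \<le> M * \<bar>s - t\<bar>"
    "\<And>t v C. 0 < t \<Longrightarrow> t < T \<Longrightarrow> (y has_vector_derivative v) (at t) \<Longrightarrow> closed C \<Longrightarrow> convex C \<Longrightarrow>
        (\<exists>\<delta>>0. \<forall>z. dist z (y t) < \<delta> \<longrightarrow> \<Phi> z \<subseteq> C) \<Longrightarrow> v \<in> C"
proof -
  define sel where "sel z = (if z \<in> cball x \<rho> then (SOME v. v \<in> \<Phi> z) else 0)" for z
  have sel_in: "sel z \<in> \<Phi> z" if "z \<in> cball x \<rho>" for z
    using ne[OF that] that by (simp add: sel_def some_in_eq)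
  have sel_bd: "norm (sel z) \<le> M" for z
  proof (cases "z \<in> cball x \<rho>")
    case True show ?thesis using bd[OF True sel_in[OF True]] by simp
  next
    case False then show ?thesis using M0 by (simp add: sel_def)
  qed
  define T where "T = \<rho> / (M + 1)"
  have T0: "0 < T" using \<rho> M0 by (simp add: T_def)
  have TM: "M * T \<le> \<rho>"
  proof -
    have "M * T = \<rho> * (M / (M + 1))" using M0 by (simp add: T_def field_simps)
    also have "\<dots> \<le> \<rho> * 1" using M0 \<rho> by (intro mult_left_mono) auto
    finally show ?thesis by simp
  qed
  define hh where "hh n = T / (real n + 1)" for n :: nat
  have hh0: "0 < hh n" for n using T0 by (simp add: hh_def)
  define F where "F n = eY sel (hh n) x" for n
  have Flip: "norm (F n s - F n t) \<le> M * \<bar>s - t\<bar>" if "0 \<le> s" "0 \<le> t" for n s t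
  proof (cases "s \<le> t")
    case True
    then show ?thesis using eY_lip[where h="hh n" and sel=sel and M=M and ua=s and ub=t and x=x, OF hh0 sel_bd] that by (simp add: F_def norm_minus_commute)
  next
    case False
    then show ?thesis using eY_lip[where h="hh n" and sel=sel and M=M and ua=t and ub=s and x=x, OF hh0 sel_bd] that by (simp add: F_def)
  qed
  have F0: "F n 0 = x" for n by (simp add: F_def hh0)
  have Fbd: "norm (F n t) \<le> norm x + M * T" if "t \<in> {0..T}" for n t
  proof -
    have "norm (F n t) \<le> norm x + norm (F n t - F n 0)"
      using F0 norm_triangle_sub by (metis add.commute)
    also have "\<dots> \<le> norm x + M * T"
      using Flip[of t 0 n] that M0 by (auto intro: order_trans mult_left_mono)
    finally show ?thesis .
  qed
  obtain g k where g: "continuous_on {0..T} g" "strict_mono (k :: nat \<Rightarrow> nat)"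
      "\<And>e. 0 < e \<Longrightarrow> \<exists>N. \<forall>n x. n \<ge> N \<and> x \<in> {0..T} \<longrightarrow> norm (F (k n) x - g x) < e"
  proof (rule Arzela_Ascoli[of "{0..T}" F "norm x + M * T"])
    show "compact {0..T}" by simp
    show "\<And>n t. t \<in> {0..T} \<Longrightarrow> norm (F n t) \<le> norm x + M * T" by (rule Fbd)
    fix t and e :: real assume t: "t \<in> {0..T}" and e: "0 < e"
    show "\<exists>d>0. \<forall>n y. y \<in> {0..T} \<and> norm (t - y) < d \<longrightarrow> norm (F n t - F n y) < e"
    proof (intro exI[of _ "e / (M + 1)"] conjI allI impI)
      show "0 < e / (M + 1)" using e M0 by simp
      fix n y assume y: "y \<in> {0..T} \<and> norm (t - y) < e / (M + 1)"
      have "norm (F n t - F n y) \<le> M * \<bar>t - y\<bar>" using Flip t y by auto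
      also have "\<dots> \<le> M * (e / (M + 1))" using y M0 by (intro mult_left_mono) auto
      also have "\<dots> < e" using e M0 by (simp add: field_simps)
      finally show "norm (F n t - F n y) < e" .
    qed
  qed blast
  have conv: "(\<lambda>n. F (k n) s) \<longlonglongrightarrow> g s" if s: "s \<in> {0..T}" for s
  proof (rule LIMSEQ_I)
    fix e :: real assume "0 < e"
    from g(3)[OF this] obtain N where "\<forall>n x. n \<ge> N \<and> x \<in> {0..T} \<longrightarrow> norm (F (k n) x - g x) < e" by blast
    then show "\<exists>N. \<forall>n\<ge>N. norm (F (k n) s - g s) < e" using s by blast
  qed
  have glip: "norm (g s - g t) \<le> M * \<bar>s - t\<bar>" if "s \<in> {0..T}" "t \<in> {0..T}" for s t
  proof (rule LIMSEQ_le_const2)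
    show "(\<lambda>n. norm (F (k n) s - F (k n) t)) \<longlonglongrightarrow> norm (g s - g t)"
      by (intro tendsto_intros conv that)
    show "\<exists>N. \<forall>n\<ge>N. norm (F (k n) s - F (k n) t) \<le> M * \<bar>s - t\<bar>"
      using Flip that by auto
  qed
  have g0: "g 0 = x"
  proof -
    have "(\<lambda>n. F (k n) 0) \<longlonglongrightarrow> g 0" using conv T0 by simp
    then have "(\<lambda>n. x) \<longlonglongrightarrow> g 0" by (simp add: F0)
    then show ?thesis by (simp add: LIMSEQ_const_iff)
  qed
  define y where "y t = g (max 0 (min T t))" for t
  have yg: "y t = g t" if "t \<in> {0..T}" for t using that by (simp add: y_def)
  have y0: "y 0 = x" using g0 T0 by (simp add: y_def)
  have ylip: "norm (y s - y t) \<le> M * \<bar>s - t\<bar>" for s t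
  proof -
    have "norm (y s - y t) \<le> M * \<bar>max 0 (min T s) - max 0 (min T t)\<bar>"
      unfolding y_def using T0 by (intro glip) auto
    also have "\<dots> \<le> M * \<bar>s - t\<bar>" using M0 by (intro mult_left_mono) auto
    finally show ?thesis .
  qed
  have closure_prop: "v \<in> C" if t: "0 < t" "t < T" and der: "(y has_vector_derivative v) (at t)"
     and C: "closed C" "convex C" and \<delta>ex: "\<exists>\<delta>>0. \<forall>z. dist z (y t) < \<delta> \<longrightarrow> \<Phi> z \<subseteq> C" for t v C
  proof (rule ccontr)
    assume vC: "v \<notin> C"
    obtain \<delta> where \<delta>: "\<delta> > 0" "\<And>z. dist z (y t) < \<delta> \<Longrightarrow> \<Phi> z \<subseteq> C" using \<delta>ex by blast
    obtain a b where ab: "a \<bullet> v < b" "\<And>c. c \<in> C \<Longrightarrow> a \<bullet> c > b"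
      using separating_hyperplane_closed_point[OF C(2) C(1) vC] by blast
    define \<eta>0 where "\<eta>0 = min (T - t) (\<delta> / (4 * (M + 1)))"
    have \<eta>0: "0 < \<eta>0" using t \<delta> M0 by (simp add: \<eta>0_def)
    have M\<eta>0: "M * \<eta>0 < \<delta> / 4"
    proof -
      have "M * \<eta>0 \<le> M * (\<delta> / (4 * (M + 1)))" using M0 by (intro mult_left_mono) (auto simp: \<eta>0_def)
      also have "\<dots> < \<delta> / 4" using \<delta> M0 by (simp add: field_simps)
      finally show ?thesis .
    qed
    have ineq: "b * \<eta> \<le> a \<bullet> (y (t + \<eta>) - y t)" if \<eta>: "0 < \<eta>" "\<eta> < \<eta>0" for \<eta>
    proof -
      have tT: "t \<in> {0..T}" "t + \<eta> \<in> {0..T}" using t \<eta> by (auto simp: \<eta>0_def)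
      obtain N1 where N1: "\<forall>n x. n \<ge> N1 \<and> x \<in> {0..T} \<longrightarrow> norm (F (k n) x - g x) < \<delta> / 4"
        using g(3)[of "\<delta>/4"] \<delta> by auto
      obtain N2 :: nat where N2: "4 * T * (M + 1) / \<delta> < real N2" using reals_Archimedean2 by blast
      have hsmall: "M * hh (k n) < \<delta> / 4" if "n \<ge> N2" for n
      proof -
        have "real N2 \<le> real (k n)" using seq_suble[OF g(2), of n] that by simp
        then have "4 * T * (M + 1) / \<delta> < real (k n) + 1" using N2 by simp
        then have "4 * T * (M + 1) < (real (k n) + 1) * \<delta>" using \<delta> by (simp add: divide_less_eq)
        then have "T * (M + 1) / (real (k n) + 1) < \<delta> / 4" by (simp add: field_simps)
        moreover have "M * hh (k n) \<le> T * (M + 1) / (real (k n) + 1)"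
          using M0 T0 by (simp add: hh_def field_simps)
        ultimately show ?thesis by linarith
      qed
      have step: "b * \<eta> \<le> a \<bullet> (F (k n) (t + \<eta>) - F (k n) t)" if n: "n \<ge> max N1 N2" for n
      proof -
        define m where "m = k n"
        define hm where "hm = hh m"
        have hm0: "0 < hm" by (simp add: hm_def hh0)
        have hms: "M * hm < \<delta> / 4" using hsmall[of n] n by (simp add: hm_def m_def)
        have "(- a) \<bullet> (eY sel hm x (t + \<eta>) - eY sel hm x t) \<le> (- b) * (t + \<eta> - t)"
        proof (rule eY_bound[OF hm0])
          show "0 \<le> t" "t \<le> t + \<eta>" using t \<eta> by auto
          fix i assume i: "eJ hm t \<le> i" "i \<le> eJ hm (t + \<eta>)"
          define \<tau> where "\<tau> = real i * hm"
          have P: "eP sel hm x i = F m \<tau>" by (simp add: F_def \<tau>_def hm_def eY_grid[OF hh0])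
          have t0: "0 \<le> t" "0 \<le> t + \<eta>" using t \<eta> by auto
          have "\<tau> \<le> real (eJ hm (t + \<eta>)) * hm" using i hm0 by (simp add: \<tau>_def)
          also have "\<dots> \<le> t + \<eta>" using eJ_bounds[OF hm0 t0(2)] by simp
          finally have \<tau>1: "\<tau> \<le> t + \<eta>" .
          have "t < (real (eJ hm t) + 1) * hm" using eJ_bounds[OF hm0 t0(1)] by simp
          also have "\<dots> \<le> \<tau> + hm" using i hm0 by (simp add: \<tau>_def algebra_simps)
          finally have \<tau>2: "t - hm < \<tau>" by simp
          have \<tau>0: "0 \<le> \<tau>" using hm0 by (simp add: \<tau>_def)
          have "norm (F m \<tau> - x) \<le> M * \<bar>\<tau> - 0\<bar>" using Flip[of \<tau> 0 m] F0[of m] \<tau>0 by simp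
          also have "\<dots> \<le> M * T" using \<tau>0 \<tau>1 tT M0 by (intro mult_left_mono) auto
          also have "\<dots> \<le> \<rho>" by (rule TM)
          finally have inball: "eP sel hm x i \<in> cball x \<rho>" using P by (simp add: dist_norm norm_minus_commute)
          have "norm (F m \<tau> - F m t) \<le> M * \<bar>\<tau> - t\<bar>" using Flip \<tau>0 t0 by simp
          also have "\<dots> \<le> M * max hm \<eta>" using \<tau>1 \<tau>2 M0 by (intro mult_left_mono) auto
          also have "\<dots> < \<delta> / 2"
          proof (cases "hm \<le> \<eta>")
            case True
            then have "M * max hm \<eta> = M * \<eta>" by simp
            also have "\<dots> \<le> M * \<eta>0" using M0 \<eta> by (intro mult_left_mono) auto
            finally show ?thesis using M\<eta>0 \<delta>(1) by linarith
          next
            case False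
            then have "M * max hm \<eta> = M * hm" by simp
            then show ?thesis using hms \<delta>(1) by linarith
          qed
          finally have d1: "norm (F m \<tau> - F m t) < \<delta> / 2" .
          have d2: "norm (F m t - g t) < \<delta> / 4" using N1 n tT by (simp add: m_def)
          have "dist (eP sel hm x i) (y t) \<le> norm (F m \<tau> - F m t) + norm (F m t - g t)"
            unfolding P yg[OF tT(1)] dist_norm by (rule norm_diff_triangle_le[of _ "F m t"]) simp_all
          also have "\<dots> < \<delta>" using d1 d2 \<delta>(1) by linarith
          finally have "sel (eP sel hm x i) \<in> C" using \<delta>(2) sel_in[OF inball] by blast
          then have "a \<bullet> sel (eP sel hm x i) > b" by (rule ab(2))
          then show "(- a) \<bullet> sel (eP sel hm x i) \<le> - b" by simp
        qed
        then show ?thesis by (simp add: F_def m_def hm_def)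
      qed
      have "(\<lambda>n. a \<bullet> (F (k n) (t + \<eta>) - F (k n) t)) \<longlonglongrightarrow> a \<bullet> (g (t + \<eta>) - g t)"
        by (intro tendsto_intros conv tT)
      then have "b * \<eta> \<le> a \<bullet> (g (t + \<eta>) - g t)"
        by (rule LIMSEQ_le_const) (use step in blast)
      then show ?thesis using yg tT by simp
    qed
    have eqf: "(\<lambda>x::real. x * (a \<bullet> v)) = (*) (a \<bullet> v)" by (auto simp: fun_eq_iff)
    have "((\<lambda>s. a \<bullet> y s) has_derivative (\<lambda>x. x * (a \<bullet> v))) (at t)"
      using has_derivative_inner_right[OF der[unfolded has_vector_derivative_def], of a] by simp
    then have "((\<lambda>s. a \<bullet> y s) has_real_derivative a \<bullet> v) (at t)"
      unfolding has_field_derivative_def eqf .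
    then have "((\<lambda>\<eta>. (a \<bullet> y (t + \<eta>) - a \<bullet> y t) / \<eta>) \<longlongrightarrow> a \<bullet> v) (at 0)"
      unfolding DERIV_def .
    then have lim: "((\<lambda>\<eta>. (a \<bullet> y (t + \<eta>) - a \<bullet> y t) / \<eta>) \<longlongrightarrow> a \<bullet> v) (at_right 0)"
      by (simp add: filterlim_at_split)
    have ev: "eventually (\<lambda>\<eta>. b \<le> (a \<bullet> y (t + \<eta>) - a \<bullet> y t) / \<eta>) (at_right 0)"
      unfolding eventually_at_right_field
    proof (intro exI[of _ \<eta>0] conjI allI impI)
      show "0 < \<eta>0" by (rule \<eta>0)
      fix \<eta> :: real assume "0 < \<eta>" "\<eta> < \<eta>0"
      then show "b \<le> (a \<bullet> y (t + \<eta>) - a \<bullet> y t) / \<eta>"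
        using ineq[of \<eta>] by (simp add: pos_le_divide_eq inner_diff_right)
    qed
    have "b \<le> a \<bullet> v" using tendsto_lowerbound[OF lim ev] by simp
    then show False using ab(1) by simp
  qed
  show ?thesis
    by (rule that[OF T0 y0 ylip closure_prop]) auto
qed



lemma lipschitz_abs_cont:
  fixes y :: "real \<Rightarrow> 'a::real_normed_vector"
  assumes L: "\<And>s t. s \<in> I \<Longrightarrow> t \<in> I \<Longrightarrow> norm (y s - y t) \<le> M * \<bar>s - t\<bar>" and M0: "0 \<le> M"
  shows "absolutely_continuous_fun I y"
  unfolding absolutely_continuous_fun_def
proof (intro allI impI)
  fix \<epsilon> :: real assume e: "\<epsilon> > 0"
  have main: "(\<Sum>k<N. norm (y (b k) - y (a k))) < \<epsilon>"
    if H1: "\<forall>k<N. a k \<le> b k \<and> {a k..b k} \<subseteq> I" and H3: "(\<Sum>k<N. b k - a k) < \<epsilon> / (M + 1)"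
    for N :: nat and a b :: "nat \<Rightarrow> real"
  proof -
    have "(\<Sum>k<N. norm (y (b k) - y (a k))) \<le> (\<Sum>k<N. M * (b k - a k))"
    proof (rule sum_mono)
      fix k assume "k \<in> {..<N}"
      then have k0: "a k \<le> b k" "{a k..b k} \<subseteq> I" using H1 by auto
      then have k: "a k \<le> b k" "a k \<in> I" "b k \<in> I" by auto
      then show "norm (y (b k) - y (a k)) \<le> M * (b k - a k)" using L[of "b k" "a k"] by simp
    qed
    also have "\<dots> = M * (\<Sum>k<N. b k - a k)" by (simp add: sum_distrib_left)
    also have "\<dots> \<le> M * (\<epsilon> / (M + 1))" using H3 M0 by (intro mult_left_mono) auto
    also have "\<dots> < \<epsilon>" using e M0 by (simp add: field_simps)
    finally show ?thesis .
  qed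
  have pos: "0 < \<epsilon> / (M + 1)" using e M0 by simp
  show "\<exists>d>0. \<forall>(N::nat) a b. (\<forall>k<N. a k \<le> b k \<and> {a k..b k} \<subseteq> I) \<and>
          (\<forall>k<N. \<forall>l<N. k \<noteq> l \<longrightarrow> {a k<..<b k} \<inter> {a l<..<b l} = {}) \<and> (\<Sum>k<N. b k - a k) < d \<longrightarrow>
          (\<Sum>k<N. norm (y (b k) - y (a k))) < \<epsilon>"
    apply (rule exI[of _ "\<epsilon> / (M + 1)"])
    apply (intro conjI allI impI)
     apply (rule pos)
    apply (rule main)
     apply (elim conjE, assumption)
    apply (elim conjE, assumption)
    done
qed

lemma Filippov_mem:
  "v \<in> Filippov G z \<longleftrightarrow> (\<forall>\<delta>>0. \<forall>S\<in>null_sets lebesgue. v \<in> closure (convex hull {G y | y. norm (y - z) \<le> \<delta> \<and> y \<notin> S}))"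
  by (auto simp: Filippov_def)

lemma Filippov_local:
  fixes G :: "'n::euclidean_space \<Rightarrow> 'n"
  assumes "0 < \<delta>" "S \<in> null_sets lebesgue" "dist z z0 < \<delta> / 2"
  shows "Filippov G z \<subseteq> closure (convex hull {G y | y. norm (y - z0) \<le> \<delta> \<and> y \<notin> S})"
proof
  fix v assume "v \<in> Filippov G z"
  then have "\<forall>\<delta>>0. \<forall>S\<in>null_sets lebesgue. v \<in> closure (convex hull {G y | y. norm (y - z) \<le> \<delta> \<and> y \<notin> S})"
    by (simp only: Filippov_mem)
  moreover have "0 < \<delta>/2" using assms(1) by simp
  ultimately have "v \<in> closure (convex hull {G y | y. norm (y - z) \<le> \<delta>/2 \<and> y \<notin> S})"
    using assms(2) by blast
  moreover have "{G y | y. norm (y - z) \<le> \<delta>/2 \<and> y \<notin> S} \<subseteq> {G y | y. norm (y - z0) \<le> \<delta> \<and> y \<notin> S}"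
  proof safe
    fix y assume "norm (y - z) \<le> \<delta>/2" "y \<notin> S"
    moreover have "norm (y - z0) \<le> norm (y - z) + norm (z - z0)" by (rule norm_diff_triangle_le[of _ z]) simp_all
    ultimately show "\<exists>y'. G y = G y' \<and> norm (y' - z0) \<le> \<delta> \<and> y' \<notin> S"
      using assms(3) by (auto simp: dist_norm)
  qed
  ultimately show "v \<in> closure (convex hull {G y | y. norm (y - z0) \<le> \<delta> \<and> y \<notin> S})"
    by (meson closure_mono hull_mono subsetD)
qed

lemma Filippov_bound:
  fixes G :: "'n::euclidean_space \<Rightarrow> 'n"
  assumes r: "0 < r" and bd: "\<And>w. norm (w - z) \<le> r \<Longrightarrow> norm (G w) \<le> M" and v: "v \<in> Filippov G z"
  shows "norm v \<le> M"
proof -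
  have "v \<in> closure (convex hull {G y | y. norm (y - z) \<le> r \<and> y \<notin> {}})"
    using v r unfolding Filippov_mem by blast
  moreover have "closure (convex hull {G y | y. norm (y - z) \<le> r \<and> y \<notin> {}}) \<subseteq> cball 0 M"
  proof (rule closure_minimal)
    show "convex hull {G y | y. norm (y - z) \<le> r \<and> y \<notin> {}} \<subseteq> cball 0 M"
      by (rule hull_minimal) (use bd in auto)
  qed simp
  ultimately show ?thesis by auto
qed

lemma Filippov_nonempty:
  fixes G :: "'n::euclidean_space \<Rightarrow> 'n"
  assumes r: "0 < r" and bd: "\<And>w. norm (w - z) \<le> r \<Longrightarrow> norm (G w) \<le> M"
  shows "Filippov G z \<noteq> {}"
proof -
  define C where "C = (\<lambda>(\<delta>::real, S::'n set). closure (convex hull {G y | y. norm (y - z) \<le> \<delta> \<and> y \<notin> S}))"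
  define I where "I = ({0<..} :: real set) \<times> (null_sets lebesgue :: 'n set set)"
  have "cball 0 M \<inter> (\<Inter>i\<in>I. C i) \<noteq> {}"
  proof (rule compact_imp_fip_image)
    show "compact (cball (0::'n) M)" by simp
    show "closed (C i)" for i by (cases i) (simp add: C_def)
    fix I' assume I': "finite I'" "I' \<subseteq> I"
    define \<delta> where "\<delta> = Min (insert r (fst ` I'))"
    define S where "S = \<Union>(snd ` I')"
    have \<delta>0: "0 < \<delta>" using I' r by (auto simp: \<delta>_def I_def)
    have \<delta>r: "\<delta> \<le> r" using I' by (simp add: \<delta>_def)
    have \<delta>le: "\<delta> \<le> fst i" if "i \<in> I'" for i using I' that by (simp add: \<delta>_def)
    have S: "S \<in> null_sets lebesgue" unfolding S_def
      using I' by (intro null_sets_UN') (auto simp: I_def intro: countable_finite)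
    have "\<not> negligible (ball z \<delta>)" using \<delta>0 by (intro open_not_negligible) auto
    moreover have "negligible S" using S by (simp add: negligible_iff_null_sets)
    ultimately have "\<not> ball z \<delta> \<subseteq> S" using negligible_subset by blast
    then obtain w where w: "w \<in> ball z \<delta>" "w \<notin> S" by blast
    have nw: "norm (w - z) \<le> \<delta>" using w by (simp add: dist_norm norm_minus_commute)
    have "G w \<in> cball 0 M" using bd[of w] nw \<delta>r by simp
    moreover have "G w \<in> C i" if "i \<in> I'" for i
    proof -
      obtain d T where i: "i = (d, T)" by (cases i)
      have "norm (w - z) \<le> d" using nw \<delta>le[OF that] i by simp
      moreover have "w \<notin> T" using w that i by (auto simp: S_def)
      ultimately have "G w \<in> {G y | y. norm (y - z) \<le> d \<and> y \<notin> T}" by blast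
      then show ?thesis unfolding i C_def by (auto intro: closure_subset[THEN subsetD] hull_inc)
    qed
    ultimately show "cball 0 M \<inter> (\<Inter>i\<in>I'. C i) \<noteq> {}" by blast
  qed
  moreover have "(\<Inter>i\<in>I. C i) \<subseteq> Filippov G z"
    unfolding Filippov_def I_def C_def by auto
  ultimately show ?thesis by blast
qed


lemma C2_cont:
  assumes "C2 h" shows "continuous_on UNIV h"
proof -
  from assms obtain Df where "\<forall>x. (h has_derivative blinfun_apply (Df x)) (at x)"
    unfolding C2_def by blast
  then have "\<forall>x. isCont h x" using has_derivative_continuous by blast
  then show ?thesis by (simp add: continuous_at_imp_continuous_on)
qed

lemma strict_imp_convex:
  assumes "strictly_convex_on UNIV h" shows "convex_on UNIV h"
proof (rule convex_onI)
  fix t :: real and a b assume t: "0 < t" "t < 1"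
  show "h ((1 - t) *\<^sub>R a + t *\<^sub>R b) \<le> (1 - t) * h a + t * h b"
  proof (cases "a = b")
    case True then show ?thesis by (simp add: algebra_simps flip: scaleR_add_left)
  next
    case False
    then show ?thesis using assms t unfolding strictly_convex_on_def by (simp add: less_imp_le)
  qed
qed simp

lemma cont_seq:
  assumes "continuous_on UNIV h" "X \<longlonglongrightarrow> l"
  shows "(\<lambda>n. h (X n)) \<longlonglongrightarrow> h l"
  using continuous_on_tendsto_compose[OF assms(1) assms(2)] by simp

lemma feasible_convex:
  assumes cg: "\<And>i. convex_on UNIV (\<lambda>u. g (z,u) $ i)"
    and fu: "feasible g z u" and fv: "feasible g z v" and t: "0 \<le> t" "t \<le> 1"
  shows "feasible g z ((1 - t) *\<^sub>R u + t *\<^sub>R v)"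
  unfolding feasible_def
proof
  fix i
  have "g (z, (1 - t) *\<^sub>R u + t *\<^sub>R v) $ i \<le> (1 - t) * g (z,u) $ i + t * g (z,v) $ i"
    using convex_onD[OF cg t] by simp
  also have "\<dots> \<le> 0"
    using fu fv t unfolding feasible_def by (simp add: add_nonpos_nonpos mult_nonneg_nonpos)
  finally show "g (z, (1 - t) *\<^sub>R u + t *\<^sub>R v) $ i \<le> 0" .
qed

lemma ustar_is_min:
  assumes sc: "\<And>z. strictly_convex_on UNIV (\<lambda>u. f (z, u))"
    and cg: "\<And>z i. convex_on UNIV (\<lambda>u. g (z, u) $ i)"
    and ex: "\<exists>u. is_minimizer f g z u"
  shows "is_minimizer f g z (ustar f g z)"
proof -
  have "\<exists>!u. is_minimizer f g z u"
  proof (rule ex_ex1I[OF ex])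
    fix u1 u2 assume m1: "is_minimizer f g z u1" and m2: "is_minimizer f g z u2"
    show "u1 = u2"
    proof (rule ccontr)
      assume ne: "u1 \<noteq> u2"
      define mid where "mid = (1 - 1/2) *\<^sub>R u1 + (1/2::real) *\<^sub>R u2"
      have fm: "feasible g z mid" unfolding mid_def
        by (rule feasible_convex[OF cg]) (use m1 m2 in \<open>auto simp: is_minimizer_def\<close>)
      have eq: "f (z, u1) = f (z, u2)" using m1 m2 unfolding is_minimizer_def by (meson order_antisym)
      have "f (z, mid) < (1 - 1/2) * f (z, u1) + (1/2) * f (z, u2)"
      proof -
        have H: "\<And>x y t. x \<noteq> y \<Longrightarrow> 0 < t \<Longrightarrow> t < 1 \<Longrightarrow>
          f (z, (1 - t) *\<^sub>R x + t *\<^sub>R y) < (1 - t) * f (z, x) + t * f (z, y)"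
          using sc[of z] unfolding strictly_convex_on_def by blast
        show ?thesis unfolding mid_def by (rule H[OF ne]) simp_all
      qed
      also have "\<dots> = f (z, u1)" using eq by simp
      finally have "f (z, mid) < f (z, u1)" .
      moreover have "f (z, u1) \<le> f (z, mid)" using m1 fm unfolding is_minimizer_def by blast
      ultimately show False by simp
    qed
  qed
  then show ?thesis unfolding ustar_def by (rule theI')
qed


lemma ustar_locally_bounded:
  fixes f :: "'a::euclidean_space \<times> 'b::euclidean_space \<Rightarrow> real" and g :: "'a \<times> 'b \<Rightarrow> real^'p"
    and us :: "'a \<Rightarrow> 'b"
  assumes fc: "continuous_on UNIV f" and gc: "continuous_on UNIV g"
    and sc: "\<And>z. strictly_convex_on UNIV (\<lambda>u. f (z,u))"
    and cg: "\<And>z i. convex_on UNIV (\<lambda>u. g (z,u) $ i)"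
    and minz: "\<And>z. is_minimizer f g z (us z)"
    and lcf: "local_compact_feasibility g x"
  shows "\<exists>\<rho>>0. \<exists>R. \<forall>z\<in>cball x \<rho>. norm (us z) \<le> R"
proof (rule ccontr)
  assume nb: "\<not> ?thesis"
  have nb': "\<exists>z\<in>cball x \<rho>. R < norm (us z)" if "\<rho> > 0" for \<rho> R
  proof (rule ccontr)
    assume "\<not> (\<exists>z\<in>cball x \<rho>. R < norm (us z))"
    then have "\<forall>z\<in>cball x \<rho>. norm (us z) \<le> R" by (auto simp: not_less)
    then show False using nb that by blast
  qed
  obtain K \<delta>1 where K: "compact K" "\<delta>1 > 0" "\<And>y. norm (y - x) < \<delta>1 \<Longrightarrow> \<exists>u\<in>K. feasible g y u"
    using lcf unfolding local_compact_feasibility_def by blast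
  have cf: "\<And>z. convex_on UNIV (\<lambda>u. f (z,u))" using sc strict_imp_convex by blast
  have fmin: "f (z, us z) \<le> f (z, v)" if "feasible g z v" for z v
    using minz[of z] that unfolding is_minimizer_def by blast
  have ufeas: "feasible g z (us z)" for z using minz[of z] unfolding is_minimizer_def by blast
  have "bounded (f ` (cball x (\<delta>1/2) \<times> K))"
    using K(1) by (intro compact_imp_bounded compact_continuous_image continuous_on_subset[OF fc] compact_Times) auto
  then obtain Mf where Mf0: "\<forall>y\<in>f ` (cball x (\<delta>1/2) \<times> K). norm y \<le> Mf"
    unfolding bounded_iff by blast
  have Mf: "f (z,u) \<le> Mf" if "z \<in> cball x (\<delta>1/2)" "u \<in> K" for z u
  proof -
    have "f (z,u) \<in> f ` (cball x (\<delta>1/2) \<times> K)" using that by blast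
    then have "norm (f (z,u)) \<le> Mf" using Mf0 by blast
    then show ?thesis by simp
  qed
  obtain RK where RK0: "\<forall>u\<in>K. norm u \<le> RK" using compact_imp_bounded[OF K(1)] unfolding bounded_iff by blast
  have RK: "norm u \<le> RK" if "u \<in> K" for u using RK0 that by blast
  have "\<forall>n::nat. \<exists>z. z \<in> cball x (min (\<delta>1/2) (1/(real n+1))) \<and> real n + RK < norm (us z)"
  proof
    fix n :: nat
    have "min (\<delta>1/2) (1/(real n+1)) > 0" using K(2) by simp
    from nb'[OF this, of "real n + RK"] show "\<exists>z. z \<in> cball x (min (\<delta>1/2) (1/(real n+1))) \<and> real n + RK < norm (us z)"
      by blast
  qed
  from choice[OF this] obtain zs where zs: "\<forall>n. zs n \<in> cball x (min (\<delta>1/2) (1/(real n+1))) \<and> real n + RK < norm (us (zs n))"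
    by blast
  have zs1: "norm (zs n - x) \<le> \<delta>1/2" for n using zs by (auto simp: dist_norm norm_minus_commute)
  have zs2: "norm (zs n - x) \<le> 1/(real n+1)" for n using zs by (auto simp: dist_norm norm_minus_commute)
  have zs3: "real n + RK < norm (us (zs n))" for n using zs by blast
  have zsc: "zs n \<in> cball x (\<delta>1/2)" for n using zs1[of n] by (simp add: dist_norm norm_minus_commute)
  have "\<forall>n. \<exists>k. k \<in> K \<and> feasible g (zs n) k"
  proof
    fix n
    have "norm (zs n - x) < \<delta>1" using zs1[of n] K(2) by simp
    then show "\<exists>k. k \<in> K \<and> feasible g (zs n) k" using K(3) by blast
  qed
  from choice[OF this] obtain ks where ks: "\<forall>n. ks n \<in> K \<and> feasible g (zs n) (ks n)" by blast
  have ksK: "ks n \<in> K" and ksf: "feasible g (zs n) (ks n)" for n using ks by auto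
  define uu where "uu n = us (zs n)" for n
  define nr where "nr n = norm (uu n - ks n)" for n
  have nr: "real n < nr n" for n
  proof -
    have "norm (uu n) - norm (ks n) \<le> nr n" unfolding nr_def by (rule norm_triangle_ineq2)
    moreover have "norm (ks n) \<le> RK" using RK ksK by blast
    ultimately show ?thesis using zs3[of n] by (simp add: uu_def)
  qed
  have nr0: "0 < nr n" for n using nr[of n] by (meson of_nat_0_le_iff order_le_less_trans)
  define dn where "dn n = (1 / nr n) *\<^sub>R (uu n - ks n)" for n
  have dn1: "norm (dn n) = 1" for n using nr0[of n] by (simp add: dn_def nr_def)
  define pn where "pn n = (ks n, dn n)" for n
  have pnin: "\<forall>n. pn n \<in> K \<times> sphere 0 1" using ksK dn1 by (simp add: pn_def)
  have "compact (K \<times> sphere (0::'b) 1)" using K(1) by (intro compact_Times) auto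
  then obtain l r where l: "l \<in> K \<times> sphere 0 1" "strict_mono (r :: nat \<Rightarrow> nat)" "(pn \<circ> r) \<longlonglongrightarrow> l"
    using seq_compactE[OF compact_imp_seq_compact pnin] by metis
  obtain kk dd where kkdd: "l = (kk, dd)" by (cases l)
  have dd1: "norm dd = 1" using l(1) kkdd by simp
  have ksr: "(\<lambda>n. ks (r n)) \<longlonglongrightarrow> kk" using tendsto_fst[OF l(3)] kkdd by (simp add: pn_def o_def)
  have dsr: "(\<lambda>n. dn (r n)) \<longlonglongrightarrow> dd" using tendsto_snd[OF l(3)] kkdd by (simp add: pn_def o_def)
  have zsr: "(\<lambda>n. zs (r n)) \<longlonglongrightarrow> x"
  proof -
    have lim0: "(\<lambda>n. 1 / (real n + 1)) \<longlonglongrightarrow> 0"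
      using LIMSEQ_inverse_real_of_nat by (simp add: inverse_eq_divide add.commute)
    have "eventually (\<lambda>n. norm (zs (r n) - x) \<le> 1 / (real n + 1)) sequentially"
    proof (rule always_eventually, rule allI)
      fix n
      have "real n \<le> real (r n)" using seq_suble[OF l(2), of n] by simp
      then have "1 / (real (r n) + 1) \<le> 1 / (real n + 1)" by (intro divide_left_mono) auto
      then show "norm (zs (r n) - x) \<le> 1 / (real n + 1)" using zs2[of "r n"] by linarith
    qed
    then have "(\<lambda>n. zs (r n) - x) \<longlonglongrightarrow> 0" using lim0 by (rule Lim_null_comparison)
    then show ?thesis by (rule LIM_zero_cancel)
  qed
  have ray1: "feasible g x (kk + \<tau> *\<^sub>R dd) \<and> f (x, kk + \<tau> *\<^sub>R dd) \<le> Mf" if \<tau>: "0 \<le> \<tau>" for \<tau>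
  proof -
    obtain N :: nat where N: "\<tau> < real N" using reals_Archimedean2 by blast
    define lam where "lam n = \<tau> / nr (r n)" for n
    define q where "q n = ks (r n) + \<tau> *\<^sub>R dn (r n)" for n
    have qeq: "q n = (1 - lam n) *\<^sub>R ks (r n) + lam n *\<^sub>R uu (r n)" for n
      using nr0[of "r n"] by (simp add: q_def dn_def lam_def algebra_simps)
    have lam01: "0 \<le> lam n \<and> lam n \<le> 1" if "n \<ge> N" for n
    proof -
      have "real N \<le> real n" using that by simp
      also have "\<dots> \<le> real (r n)" using seq_suble[OF l(2), of n] by simp
      also have "\<dots> < nr (r n)" by (rule nr)
      finally have "\<tau> \<le> nr (r n)" using N by simp
      then show ?thesis using \<tau> nr0[of "r n"] by (simp add: lam_def divide_le_eq_1)
    qed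
    have feas: "feasible g (zs (r n)) (q n)" if "n \<ge> N" for n
      unfolding qeq using lam01[OF that] ksf ufeas
      by (intro feasible_convex[OF cg]) (auto simp: uu_def)
    have fq: "f (zs (r n), q n) \<le> Mf" if "n \<ge> N" for n
    proof -
      have l01: "0 \<le> lam n" "lam n \<le> 1" using lam01[OF that] by auto
      have "f (zs (r n), q n) \<le> (1 - lam n) * f (zs (r n), ks (r n)) + lam n * f (zs (r n), uu (r n))"
        unfolding qeq using convex_onD[OF cf l01] by simp
      also have "\<dots> \<le> (1 - lam n) * f (zs (r n), ks (r n)) + lam n * f (zs (r n), ks (r n))"
        using fmin[OF ksf[of "r n"]] l01 by (intro add_left_mono mult_left_mono) (auto simp: uu_def)
      also have "\<dots> = f (zs (r n), ks (r n))" by (simp add: algebra_simps)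
      also have "\<dots> \<le> Mf" using Mf[OF zsc ksK] .
      finally show ?thesis .
    qed
    have qlim: "q \<longlonglongrightarrow> kk + \<tau> *\<^sub>R dd" unfolding q_def by (intro tendsto_intros ksr dsr)
    have pair: "(\<lambda>n. (zs (r n), q n)) \<longlonglongrightarrow> (x, kk + \<tau> *\<^sub>R dd)" by (rule tendsto_Pair[OF zsr qlim])
    have "feasible g x (kk + \<tau> *\<^sub>R dd)"
      unfolding feasible_def
    proof
      fix i
      have "(\<lambda>n. g (zs (r n), q n) $ i) \<longlonglongrightarrow> g (x, kk + \<tau> *\<^sub>R dd) $ i"
        by (rule tendsto_vec_nth[OF cont_seq[OF gc pair]])
      then show "g (x, kk + \<tau> *\<^sub>R dd) $ i \<le> 0"
        by (rule LIMSEQ_le_const2) (use feas in \<open>auto simp: feasible_def\<close>)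
    qed
    moreover have "f (x, kk + \<tau> *\<^sub>R dd) \<le> Mf"
      using cont_seq[OF fc pair] by (rule LIMSEQ_le_const2) (use fq in auto)
    ultimately show ?thesis by blast
  qed
  define u0 where "u0 = us x"
  have ray2: "feasible g x (u0 + \<tau> *\<^sub>R dd) \<and> f (x, u0 + \<tau> *\<^sub>R dd) \<le> f (x, u0)" if \<tau>: "0 \<le> \<tau>" for \<tau>
  proof -
    define lm where "lm m = 1 / (real m + 2)" for m :: nat
    have lm0: "0 < lm m" "lm m \<le> 1" for m by (auto simp: lm_def)
    define w where "w m = kk + (\<tau> / lm m) *\<^sub>R dd" for m
    have wf: "feasible g x (w m) \<and> f (x, w m) \<le> Mf" for m
      unfolding w_def using ray1 \<tau> lm0[of m] by simp
    define p where "p m = (1 - lm m) *\<^sub>R u0 + lm m *\<^sub>R w m" for m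
    have peq: "p m = (1 - lm m) *\<^sub>R u0 + lm m *\<^sub>R kk + \<tau> *\<^sub>R dd" for m
      using lm0[of m] by (simp add: p_def w_def algebra_simps)
    have pfeas: "feasible g x (p m)" for m
      unfolding p_def using lm0[of m] wf ufeas by (intro feasible_convex[OF cg]) (auto simp: u0_def)
    have pf: "f (x, p m) - ((1 - lm m) * f (x, u0) + lm m * Mf) \<le> 0" for m
    proof -
      have l01: "0 \<le> lm m" "lm m \<le> 1" using lm0[of m] by auto
      have "f (x, p m) \<le> (1 - lm m) * f (x, u0) + lm m * f (x, w m)"
        unfolding p_def using convex_onD[OF cf l01] by simp
      also have "\<dots> \<le> (1 - lm m) * f (x, u0) + lm m * Mf"
        using wf l01 by (intro add_left_mono mult_left_mono) auto
      finally show ?thesis by simp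
    qed
    have lmlim: "lm \<longlonglongrightarrow> 0"
    proof -
      have "(\<lambda>n. inverse (real (Suc n))) \<longlonglongrightarrow> 0" by (rule LIMSEQ_inverse_real_of_nat)
      then have "(\<lambda>n. inverse (real (Suc (Suc n)))) \<longlonglongrightarrow> 0" by (rule LIMSEQ_Suc)
      moreover have "(\<lambda>n. inverse (real (Suc (Suc n)))) = lm"
        by (auto simp: lm_def fun_eq_iff inverse_eq_divide add.commute)
      ultimately show ?thesis by simp
    qed
    have plim: "p \<longlonglongrightarrow> u0 + \<tau> *\<^sub>R dd"
    proof -
      have "(\<lambda>m. (1 - lm m) *\<^sub>R u0 + lm m *\<^sub>R kk + \<tau> *\<^sub>R dd) \<longlonglongrightarrow> (1 - 0) *\<^sub>R u0 + 0 *\<^sub>R kk + \<tau> *\<^sub>R dd"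
        by (intro tendsto_intros lmlim)
      then show ?thesis by (simp add: peq[abs_def])
    qed
    have pairs: "(\<lambda>m. (x, p m)) \<longlonglongrightarrow> (x, u0 + \<tau> *\<^sub>R dd)" by (intro tendsto_Pair tendsto_const plim)
    have "feasible g x (u0 + \<tau> *\<^sub>R dd)"
      unfolding feasible_def
    proof
      fix i
      have "(\<lambda>m. g (x, p m) $ i) \<longlonglongrightarrow> g (x, u0 + \<tau> *\<^sub>R dd) $ i"
        by (rule tendsto_vec_nth[OF cont_seq[OF gc pairs]])
      then show "g (x, u0 + \<tau> *\<^sub>R dd) $ i \<le> 0"
        by (rule LIMSEQ_le_const2) (use pfeas in \<open>auto simp: feasible_def\<close>)
    qed
    moreover have "f (x, u0 + \<tau> *\<^sub>R dd) - ((1 - 0) * f (x, u0) + 0 * Mf) \<le> 0"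
    proof (rule LIMSEQ_le_const2)
      show "(\<lambda>m. f (x, p m) - ((1 - lm m) * f (x, u0) + lm m * Mf)) \<longlonglongrightarrow> f (x, u0 + \<tau> *\<^sub>R dd) - ((1 - 0) * f (x, u0) + 0 * Mf)"
        by (intro tendsto_intros cont_seq[OF fc pairs] lmlim)
      show "\<exists>N. \<forall>n\<ge>N. f (x, p n) - ((1 - lm n) * f (x, u0) + lm n * Mf) \<le> 0" using pf by blast
    qed
    ultimately show ?thesis by simp
  qed
  define a where "a = u0 + 1 *\<^sub>R dd"
  define b where "b = u0 + 2 *\<^sub>R dd"
  have fa: "f (x, a) = f (x, u0)"
    using ray2[of 1] fmin[of x a] by (simp add: a_def u0_def)
  have fb: "f (x, b) = f (x, u0)"
    using ray2[of 2] fmin[of x b] by (simp add: b_def u0_def)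
  have H: "\<And>y1 y2 t. y1 \<noteq> y2 \<Longrightarrow> 0 < t \<Longrightarrow> t < 1 \<Longrightarrow>
          f (x, (1 - t) *\<^sub>R y1 + t *\<^sub>R y2) < (1 - t) * f (x, y1) + t * f (x, y2)"
    using sc[of x] unfolding strictly_convex_on_def by blast
  have "u0 \<noteq> b" using dd1 by (auto simp: b_def)
  from H[OF this, of "1/2"] have "f (x, (1 - 1/2) *\<^sub>R u0 + (1/2) *\<^sub>R b) < (1 - 1/2) * f (x, u0) + (1/2) * f (x, b)"
    by simp
  moreover have "(1 - 1/2) *\<^sub>R u0 + (1/2::real) *\<^sub>R b = a"
  proof -
    have e1: "(1/2::real) *\<^sub>R u0 + (1/2::real) *\<^sub>R u0 = u0" by (simp flip: scaleR_add_left)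
    have "(1 - 1/2) *\<^sub>R u0 + (1/2::real) *\<^sub>R b = ((1/2::real) *\<^sub>R u0 + (1/2::real) *\<^sub>R u0) + dd"
      by (simp add: b_def algebra_simps)
    then show ?thesis by (simp add: e1 a_def)
  qed
  ultimately show False using fa fb by simp
qed


lemma locally_lipschitz_cont:
  assumes "locally_lipschitz F" shows "continuous_on UNIV F"
proof -
  have "isCont F z" for z
  proof -
    obtain r L where r: "r > 0" "L-lipschitz_on (ball z r) F"
      using assms unfolding locally_lipschitz_def by blast
    have "continuous_on (ball z r) F" using r(2) by (rule lipschitz_on_continuous_on)
    then show ?thesis using r(1) by (simp add: continuous_on_eq_continuous_at)
  qed
  then show ?thesis by (simp add: continuous_at_imp_continuous_on)
qed

lemma negligible_uminus_image:
  fixes N :: "real set"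
  assumes "negligible N" shows "negligible (uminus ` N)"
  by (rule negligible_differentiable_image_negligible[OF order_refl assms])
     (auto intro!: derivative_intros simp: differentiable_on_def)

theorem proposition4p5:
  fixes f :: "(real^('n::finite)) \<times> (real^('m::finite)) \<Rightarrow> real"
    and g :: "(real^'n) \<times> (real^'m) \<Rightarrow> real^('p::finite)"
    and F :: "(real^'n) \<times> (real^'m) \<Rightarrow> real^'n"
  assumes "C2 f" and "C2 g"
    and "\<And>x. strictly_convex_on UNIV (\<lambda>u. f (x, u))"
    and "\<And>x i. convex_on UNIV (\<lambda>u. g (x, u) $ i)"
    and "\<And>x. \<exists>u. is_minimizer f g x u"
    and "\<And>x. local_compact_feasibility g x"
    and "locally_lipschitz F"
  shows "\<forall>x. \<exists>\<delta>>0. \<exists>y. Filippov_solution (\<lambda>z. F (z, ustar f g z)) {-\<delta><..<\<delta>} y \<and> y 0 = x"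
proof
  fix x :: "real^'n"
  define G where "G = (\<lambda>z. F (z, ustar f g z))"
  have fc: "continuous_on UNIV f" using assms(1) by (rule C2_cont)
  have gc: "continuous_on UNIV g" using assms(2) by (rule C2_cont)
  have minz: "\<And>z. is_minimizer f g z (ustar f g z)"
    using ustar_is_min[OF assms(3) assms(4) assms(5)] by blast
  obtain \<rho>0 R where \<rho>0: "\<rho>0 > 0" and R: "\<forall>z\<in>cball x \<rho>0. norm (ustar f g z) \<le> R"
    using ustar_locally_bounded[OF fc gc assms(3) assms(4) minz assms(6)[of x]] by blast
  have Fc: "continuous_on UNIV F" using assms(7) by (rule locally_lipschitz_cont)
  have "bounded (F ` (cball x \<rho>0 \<times> cball 0 R))"
    by (intro compact_imp_bounded compact_continuous_image continuous_on_subset[OF Fc] compact_Times) auto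
  then obtain M0 where M0: "\<forall>v\<in>F ` (cball x \<rho>0 \<times> cball 0 R). norm v \<le> M0"
    unfolding bounded_iff by blast
  define M where "M = max M0 0"
  have M0': "0 \<le> M" by (simp add: M_def)
  have Gb: "norm (G z) \<le> M" if "z \<in> cball x \<rho>0" for z
  proof -
    have "ustar f g z \<in> cball 0 R" using R that by simp
    then have "G z \<in> F ` (cball x \<rho>0 \<times> cball 0 R)" using that unfolding G_def by blast
    then have "norm (G z) \<le> M0" using M0 by blast
    then show ?thesis by (simp add: M_def)
  qed
  define \<rho> where "\<rho> = \<rho>0 / 2"
  have \<rho>: "0 < \<rho>" using \<rho>0 by (simp add: \<rho>_def)
  have Gb': "norm (G w) \<le> M" if "z \<in> cball x \<rho>" "norm (w - z) \<le> \<rho>" for z w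
  proof -
    have "dist x w \<le> dist x z + dist z w" by (rule dist_triangle)
    also have "\<dots> \<le> \<rho> + \<rho>" using that by (simp add: dist_norm norm_minus_commute)
    finally have "w \<in> cball x \<rho>0" by (simp add: \<rho>_def)
    then show ?thesis by (rule Gb)
  qed
  have ne: "Filippov G z \<noteq> {}" if "z \<in> cball x \<rho>" for z
    using Filippov_nonempty[OF \<rho>, where G=G and z=z and M=M] Gb'[OF that] by blast
  have bd: "norm v \<le> M" if "z \<in> cball x \<rho>" "v \<in> Filippov G z" for z v
    using Filippov_bound[OF \<rho>, where G=G and z=z and M=M and v=v] Gb'[OF that(1)] that(2) by blast
  obtain T1 y1 where T1: "0 < T1" "y1 0 = x" "\<And>s t. norm (y1 s - y1 t) \<le> M * \<bar>s - t\<bar>"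
    "\<And>t v C. 0 < t \<Longrightarrow> t < T1 \<Longrightarrow> (y1 has_vector_derivative v) (at t) \<Longrightarrow> closed C \<Longrightarrow> convex C \<Longrightarrow>
        (\<exists>\<delta>>0. \<forall>z. dist z (y1 t) < \<delta> \<longrightarrow> Filippov G z \<subseteq> C) \<Longrightarrow> v \<in> C"
    using inclusion_forward[OF \<rho> M0', where \<Phi>="Filippov G" and x=x] ne bd by blast
  define \<Phi>2 where "\<Phi>2 z = uminus ` Filippov G z" for z
  have ne2: "\<Phi>2 z \<noteq> {}" if "z \<in> cball x \<rho>" for z using ne[OF that] by (simp add: \<Phi>2_def)
  have bd2: "norm v \<le> M" if "z \<in> cball x \<rho>" "v \<in> \<Phi>2 z" for z v
    using bd[OF that(1)] that(2) by (auto simp: \<Phi>2_def)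
  obtain T2 y2 where T2: "0 < T2" "y2 0 = x" "\<And>s t. norm (y2 s - y2 t) \<le> M * \<bar>s - t\<bar>"
    "\<And>t v C. 0 < t \<Longrightarrow> t < T2 \<Longrightarrow> (y2 has_vector_derivative v) (at t) \<Longrightarrow> closed C \<Longrightarrow> convex C \<Longrightarrow>
        (\<exists>\<delta>>0. \<forall>z. dist z (y2 t) < \<delta> \<longrightarrow> \<Phi>2 z \<subseteq> C) \<Longrightarrow> v \<in> C"
    using inclusion_forward[OF \<rho> M0', where \<Phi>=\<Phi>2 and x=x] ne2 bd2 by blast
  define \<delta> where "\<delta> = min T1 T2"
  have \<delta>0: "0 < \<delta>" using T1 T2 by (simp add: \<delta>_def)
  define y where "y t = (if 0 \<le> t then y1 t else y2 (- t))" for t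
  have y0: "y 0 = x" using T1 by (simp add: y_def)
  have ylip: "norm (y s - y t) \<le> M * \<bar>s - t\<bar>" for s t
  proof -
    have mixed: "norm (y1 a - y2 b) \<le> M * \<bar>a + b\<bar>" if "0 \<le> a" "0 \<le> b" for a b
    proof -
      have "norm (y1 a - y2 b) \<le> norm (y1 a - y1 0) + norm (y2 0 - y2 b)"
        using T1(2) T2(2) norm_diff_triangle_le by (metis order_refl)
      also have "\<dots> \<le> M * \<bar>a - 0\<bar> + M * \<bar>0 - b\<bar>" using T1(3)[of a 0] T2(3)[of 0 b] by (rule add_mono)
      also have "\<dots> = M * \<bar>a + b\<bar>" using that by (simp add: algebra_simps)
      finally show ?thesis .
    qed
    show ?thesis
    proof (cases "0 \<le> s"; cases "0 \<le> t")
      assume "0 \<le> s" "0 \<le> t" then show ?thesis using T1(3) by (simp add: y_def)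
    next
      assume "0 \<le> s" "\<not> 0 \<le> t" then show ?thesis using mixed[of s "-t"] by (simp add: y_def)
    next
      assume "\<not> 0 \<le> s" "0 \<le> t" then show ?thesis using mixed[of t "-s"]
        by (simp add: y_def norm_minus_commute abs_minus_commute add.commute)
    next
      assume "\<not> 0 \<le> s" "\<not> 0 \<le> t" then show ?thesis using T2(3)[of "-s" "-t"] by (simp add: y_def abs_minus_commute)
    qed
  qed
  have AC: "absolutely_continuous_fun {-\<delta><..<\<delta>} y"
    using ylip M0' by (intro lipschitz_abs_cont) auto
  obtain N1 where N1: "negligible N1" "\<And>t. t \<notin> N1 \<Longrightarrow> y1 differentiable (at t)"
    using lipschitz_differentiable_ae[of y1 M] T1(3) by blast
  obtain N2 where N2: "negligible N2" "\<And>t. t \<notin> N2 \<Longrightarrow> y2 differentiable (at t)"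
    using lipschitz_differentiable_ae[of y2 M] T2(3) by blast
  define N where "N = N1 \<union> uminus ` N2 \<union> {0}"
  have negN: "negligible N" unfolding N_def
    using N1(1) negligible_uminus_image[OF N2(1)] by (intro negligible_Un) auto
  have key: "\<exists>v. (y has_vector_derivative v) (at t) \<and> v \<in> Filippov G (y t)"
    if t: "t \<in> {-\<delta><..<\<delta>}" "t \<notin> N" for t
  proof (cases "0 < t")
    case True
    have "t \<notin> N1" using t by (auto simp: N_def)
    then have d1: "(y1 has_vector_derivative vector_derivative y1 (at t)) (at t)"
      using N1(2) vector_derivative_works by blast
    have dy: "(y has_vector_derivative vector_derivative y1 (at t)) (at t)"
      by (rule has_vector_derivative_transform_within_open[OF d1, of "{0<..}"]) (use True in \<open>auto simp: y_def\<close>)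
    have tT: "t < T1" using t by (simp add: \<delta>_def)
    have "vector_derivative y1 (at t) \<in> Filippov G (y1 t)"
      unfolding Filippov_mem
    proof (intro allI impI ballI)
      fix d :: real and S :: "(real^'n) set" assume d: "0 < d" and S: "S \<in> null_sets lebesgue"
      show "vector_derivative y1 (at t) \<in> closure (convex hull {G w | w. norm (w - y1 t) \<le> d \<and> w \<notin> S})"
      proof (rule T1(4)[OF True tT d1])
        show "closed (closure (convex hull {G w | w. norm (w - y1 t) \<le> d \<and> w \<notin> S}))" by simp
        show "convex (closure (convex hull {G w | w. norm (w - y1 t) \<le> d \<and> w \<notin> S}))"
          by (simp add: convex_closure)
        show "\<exists>\<delta>>0. \<forall>z. dist z (y1 t) < \<delta> \<longrightarrow> Filippov G z \<subseteq> closure (convex hull {G w | w. norm (w - y1 t) \<le> d \<and> w \<notin> S})"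
          using Filippov_local[OF d S] d by (intro exI[of _ "d/2"]) auto
      qed
    qed
    then show ?thesis using dy True by (auto simp: y_def)
  next
    case False
    then have tneg: "t < 0" using t by (auto simp: N_def)
    have "- t \<notin> N2" using t by (auto simp: N_def image_iff)
    then have d2: "(y2 has_vector_derivative vector_derivative y2 (at (- t))) (at (- t))"
      using N2(2) vector_derivative_works by blast
    define v2 where "v2 = vector_derivative y2 (at (- t))"
    have "((\<lambda>s. - s) has_vector_derivative (-1)) (at t)"
      by (auto intro!: derivative_eq_intros)
    from vector_diff_chain_at[OF this, of y2] d2
    have "((y2 \<circ> uminus) has_vector_derivative (-1) *\<^sub>R v2) (at t)" by (simp add: v2_def)
    then have d2': "((\<lambda>s. y2 (- s)) has_vector_derivative - v2) (at t)" by (simp add: o_def)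
    have dy: "(y has_vector_derivative - v2) (at t)"
      by (rule has_vector_derivative_transform_within_open[OF d2', of "{..<0}"]) (use tneg in \<open>auto simp: y_def\<close>)
    have tT: "- t < T2" "0 < - t" using t tneg by (auto simp: \<delta>_def)
    have "- v2 \<in> Filippov G (y2 (- t))"
      unfolding Filippov_mem
    proof (intro allI impI ballI)
      fix d :: real and S :: "(real^'n) set" assume d: "0 < d" and S: "S \<in> null_sets lebesgue"
      define C where "C = closure (convex hull {G w | w. norm (w - y2 (- t)) \<le> d \<and> w \<notin> S})"
      have "v2 \<in> uminus ` C"
      proof (rule T2(4)[OF tT(2) tT(1) d2[folded v2_def]])
        show "closed (uminus ` C)" unfolding C_def by (intro closed_negations) simp
        show "convex (uminus ` C)" unfolding C_def by (intro convex_negations convex_closure) simp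
        show "\<exists>\<delta>>0. \<forall>z. dist z (y2 (- t)) < \<delta> \<longrightarrow> \<Phi>2 z \<subseteq> uminus ` C"
        proof (intro exI[of _ "d/2"] conjI allI impI)
          show "0 < d/2" using d by simp
          fix z assume "dist z (y2 (- t)) < d/2"
          then have "Filippov G z \<subseteq> C" using Filippov_local[OF d S] unfolding C_def by blast
          then show "\<Phi>2 z \<subseteq> uminus ` C" unfolding \<Phi>2_def by (rule image_mono)
        qed
      qed
      then show "- v2 \<in> closure (convex hull {G w | w. norm (w - y2 (- t)) \<le> d \<and> w \<notin> S})"
        by (auto simp: C_def)
    qed
    then show ?thesis using dy tneg by (auto simp: y_def)
  qed
  have AE: "AE t in lebesgue. t \<in> {-\<delta><..<\<delta>} \<longrightarrow> (\<exists>v. (y has_vector_derivative v) (at t) \<and> v \<in> Filippov G (y t))"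
  proof (rule AE_I'[of N])
    show "N \<in> null_sets lebesgue" using negN by (simp add: negligible_iff_null_sets)
    show "{t \<in> space lebesgue. \<not> (t \<in> {-\<delta><..<\<delta>} \<longrightarrow> (\<exists>v. (y has_vector_derivative v) (at t) \<and> v \<in> Filippov G (y t)))} \<subseteq> N"
      using key by blast
  qed
  have "Filippov_solution G {-\<delta><..<\<delta>} y"
    unfolding Filippov_solution_def using AC AE by blast
  then show "\<exists>\<delta>>0. \<exists>y. Filippov_solution (\<lambda>z. F (z, ustar f g z)) {-\<delta><..<\<delta>} y \<and> y 0 = x"
    using \<delta>0 y0 unfolding G_def by blast
qed


end
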